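(* Let $m\ge1$ and let $Y'^1,\dots,Y'^m$ be independent copies of a (thinned) single-fluorophore detected-photon process $Y'=(Y'_t)_{t=1}^T$ which is itself the photon process of an HTMM with parameters as below; put $Y'^{(m)}_t=\sum_{k=1}^mY'^k_t$. Let $(U_{t,k})_{t,k\ge1}$ be i.i.d. nonnegative random variables, independent of everything else, with mean $u>0$ and finite variance, and set $f^2=\mathrm{Var}[U_{1,1}]/u^2+1$. Let $c>0$, $o\in\mathbb R$, and let $\epsilon_1,\dots,\epsilon_T$ be independent centered random variables with variances $\sigma_t^2$, independent of everything else. Define $E_t=\sum_{k=1}^{Y'^{(m)}_t}U_{t,k}$, $\widetilde Y_t=cE_t+o+\epsilon_t$, and $a=cu$. Under the hypotheses ($0<q_{00}<1$, $\theta_1>0$, finite moment generating functions near $0$, diagonalizable $M=V\Lambda V^{-1}$ with $\lambda_r=1$ and column $r$ of $V$ equal to $e_r$), the normalized process $Z_t=(\widetilde Y_t-o)/a$ has mean and covariance $$\mathbb E[Z_t]=\mu_t:=m\theta_1\sum_{x=0}^{r-1}\alpha_x\lambda_x^{t-1},$$ $$\mathrm{Var}[Z_t]=\frac1m\big(m\theta_1(\theta_3+1)+mf^2-\mu_t\big)\mu_t+\frac{\sigma_t^2}{a^2},$$ $$\mathrm{Cov}(Z_t,Z_{t'})=\frac1m\left[\Big(\theta_2-q_{00}\frac{1-\theta_2}{1-q_{00}}\Big)\mu^0_{t-t'}+\frac{1-\theta_2}{1-q_{00}}\mu^0_{t-t'+1}-\mu_t\right]\mu_{t'}\quad(1\le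 t'<t\le T),$$ where $\mu^0_k=m\theta_1\sum_{x=0}^{r-1}\alpha^0_x\lambda_x^{k-1}$.
   Context: HTMM: fix $r\ge1$, $T\ge1$, $\mathcal S=\{0,\dots,r\}$; $q_{xz}\in[0,1]$ ($x\in\mathcal S$, $0\le z\le r-1$) with $\sum_xq_{xz}=1$; column-stochastic $M^\ell$ with column $0$ equal to $e_0$, column $r$ equal to $e_r$, $M^\ell_{xz}=q_{xz}$ for $1\le z\le r-1$; $M^s$ with column $0$ equal to $(q_{00},\dots,q_{r0})^{\mathrm T}$ and $M^s_{xz}=\delta_{xz}$ for $z\ge1$; $M=M^sM^\ell$. $p_{00},p_{10}$ are distributions on $\mathbb N_0$, $p_{x0}:=p_{10}$ for $x\ge1$, $p_{xx'}:=\delta_0$ for $x'\neq0$; $\nu$ a probability vector. The single-fluorophore process $(X_0,X'_1,X_1,Y'_1,\dots)$ has joint law $\nu_{x_0}\prod_{t}M^\ell_{x'_tx_{t-1}}M^s_{x_tx'_t}p_{x_tx'_t}(y_t)$. Parameters (for this detected-photon process): $\theta_1=\mathbb E[Y'_t\mid X'_t=0]$, $\theta_2=q_{00}\mathbb E[Y'_t\mid X'_t=X_t=0]/\theta_1$, $\theta_3=\mathrm{Var}[Y'_t\mid X'_t=0]/\theta_1^2-1/\theta_1$. Coefficients: $\alpha_x=V_{0x}\frac{\lambda_x}{q_{00}}\sum_z(V^{-1})_{xz}\nu_z$, $\alpha^0_x=\frac{\lambda_x}{q_{00}}V_{0x}(V^{-1})_{x0}$ (note $\alpha_r=\alpha^0_r=0$).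 Convention $0^0=1$. *)

theory Defs
  imports "HOL-Probability.Probability"
begin

text \<open>Transition matrices of the HTMM (indices 0..r); q x z given for 0 <= z <= r-1.\<close>

definition Ml :: "nat \<Rightarrow> (nat \<Rightarrow> nat \<Rightarrow> real) \<Rightarrow> nat \<Rightarrow> nat \<Rightarrow> real" where
  "Ml r q x z = (if z = 0 then (if x = 0 then 1 else 0)
                 else if z = r then (if x = r then 1 else 0) else q x z)"

definition Ms :: "(nat \<Rightarrow> nat \<Rightarrow> real) \<Rightarrow> nat \<Rightarrow> nat \<Rightarrow> real" where
  "Ms q x z = (if z = 0 then q x 0 else if x = z then 1 else 0)"

definition Mmat :: "nat \<Rightarrow> (nat \<Rightarrow> nat \<Rightarrow> real) \<Rightarrow> nat \<Rightarrow> nat \<Rightarrow> real" where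
  "Mmat r q x z = (\<Sum>y\<le>r. Ms q x y * Ml r q y z)"

definition emis :: "nat pmf \<Rightarrow> nat pmf \<Rightarrow> nat \<Rightarrow> nat \<Rightarrow> nat pmf" where
  "emis p00 p10 x x' = (if x' = 0 then (if x = 0 then p00 else p10) else return_pmf 0)"

definition pmf_mean :: "nat pmf \<Rightarrow> real" where
  "pmf_mean p = measure_pmf.expectation p real"

definition pmf_mom2 :: "nat pmf \<Rightarrow> real" where
  "pmf_mom2 p = measure_pmf.expectation p (\<lambda>n. (real n)\<^sup>2)"

definition mgf_finite_near0 :: "nat pmf \<Rightarrow> bool" where
  "mgf_finite_near0 p \<longleftrightarrow> (\<exists>\<delta>>0. \<forall>s. \<bar>s\<bar> < \<delta> \<longrightarrow> summable (\<lambda>n. pmf p n * exp (s * real n)))"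

text \<open>Parameters: the conditional law of Y'_t given X'_t = 0 is the mixture of
  p_{x0} with weights M^s_{x0} = q_{x0} (law of X_t given X'_t = 0).\<close>

definition theta1 :: "nat \<Rightarrow> (nat \<Rightarrow> nat \<Rightarrow> real) \<Rightarrow> nat pmf \<Rightarrow> nat pmf \<Rightarrow> real" where
  "theta1 r q p00 p10 = (\<Sum>x\<le>r. Ms q x 0 * pmf_mean (emis p00 p10 x 0))"

definition theta2 :: "nat \<Rightarrow> (nat \<Rightarrow> nat \<Rightarrow> real) \<Rightarrow> nat pmf \<Rightarrow> nat pmf \<Rightarrow> real" where
  "theta2 r q p00 p10 = q 0 0 * pmf_mean (emis p00 p10 0 0) / theta1 r q p00 p10"

definition theta3 :: "nat \<Rightarrow> (nat \<Rightarrow> nat \<Rightarrow> real) \<Rightarrow> nat pmf \<Rightarrow> nat pmf \<Rightarrow> real" where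
  "theta3 r q p00 p10 =
     ((\<Sum>x\<le>r. Ms q x 0 * pmf_mom2 (emis p00 p10 x 0)) - (theta1 r q p00 p10)\<^sup>2)
        / (theta1 r q p00 p10)\<^sup>2 - 1 / theta1 r q p00 p10"

definition alpha :: "nat \<Rightarrow> (nat \<Rightarrow> nat \<Rightarrow> complex) \<Rightarrow> (nat \<Rightarrow> nat \<Rightarrow> complex) \<Rightarrow> (nat \<Rightarrow> complex)
                     \<Rightarrow> (nat \<Rightarrow> nat \<Rightarrow> real) \<Rightarrow> (nat \<Rightarrow> real) \<Rightarrow> nat \<Rightarrow> complex" where
  "alpha r V Vinv lam q \<nu> x =
     V 0 x * (lam x / complex_of_real (q 0 0)) * (\<Sum>z\<le>r. Vinv x z * complex_of_real (\<nu> z))"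

definition alpha0 :: "(nat \<Rightarrow> nat \<Rightarrow> complex) \<Rightarrow> (nat \<Rightarrow> nat \<Rightarrow> complex) \<Rightarrow> (nat \<Rightarrow> complex)
                     \<Rightarrow> (nat \<Rightarrow> nat \<Rightarrow> real) \<Rightarrow> nat \<Rightarrow> complex" where
  "alpha0 V Vinv lam q x = (lam x / complex_of_real (q 0 0)) * V 0 x * Vinv x 0"

definition mu_of :: "nat \<Rightarrow> nat \<Rightarrow> real \<Rightarrow> (nat \<Rightarrow> complex) \<Rightarrow> (nat \<Rightarrow> complex) \<Rightarrow> nat \<Rightarrow> complex" where
  "mu_of r m th1 coef lam t = of_nat m * complex_of_real th1 * (\<Sum>x<r. coef x * lam x ^ (t - 1))"

definition photon_sum :: "(nat \<Rightarrow> nat \<Rightarrow> 'a \<Rightarrow> nat) \<Rightarrow> nat \<Rightarrow> nat \<Rightarrow> 'a \<Rightarrow> nat" where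
  "photon_sum Yp m t \<omega> = (\<Sum>k\<in>{1..m}. Yp k t \<omega>)"

definition Eproc :: "(nat \<Rightarrow> nat \<Rightarrow> 'a \<Rightarrow> real) \<Rightarrow> (nat \<Rightarrow> nat \<Rightarrow> 'a \<Rightarrow> nat) \<Rightarrow> nat \<Rightarrow> nat \<Rightarrow> 'a \<Rightarrow> real" where
  "Eproc U Yp m t \<omega> = (\<Sum>k\<in>{1..photon_sum Yp m t \<omega>}. U t k \<omega>)"

definition Ytilde :: "real \<Rightarrow> real \<Rightarrow> (nat \<Rightarrow> nat \<Rightarrow> 'a \<Rightarrow> real) \<Rightarrow> (nat \<Rightarrow> 'a \<Rightarrow> real)
                     \<Rightarrow> (nat \<Rightarrow> nat \<Rightarrow> 'a \<Rightarrow> nat) \<Rightarrow> nat \<Rightarrow> nat \<Rightarrow> 'a \<Rightarrow> real" where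
  "Ytilde c ofs U eps Yp m t \<omega> = c * Eproc U Yp m t \<omega> + ofs + eps t \<omega>"

definition Zproc :: "real \<Rightarrow> real \<Rightarrow> real \<Rightarrow> (nat \<Rightarrow> nat \<Rightarrow> 'a \<Rightarrow> real) \<Rightarrow> (nat \<Rightarrow> 'a \<Rightarrow> real)
                     \<Rightarrow> (nat \<Rightarrow> nat \<Rightarrow> 'a \<Rightarrow> nat) \<Rightarrow> nat \<Rightarrow> nat \<Rightarrow> 'a \<Rightarrow> real" where
  "Zproc c u ofs U eps Yp m t \<omega> = (Ytilde c ofs U eps Yp m t \<omega> - ofs) / (c * u)"

text \<open>Sources of randomness, for stating mutual independence.\<close>
datatype src = Fluo nat | Unoise nat nat | Enoise nat

definition fluo_gen :: "'a measure \<Rightarrow> nat \<Rightarrow> (nat \<Rightarrow> nat \<Rightarrow> 'a \<Rightarrow> nat) \<Rightarrow> (nat \<Rightarrow> nat \<Rightarrow> 'a \<Rightarrow> nat)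
                        \<Rightarrow> (nat \<Rightarrow> nat \<Rightarrow> 'a \<Rightarrow> nat) \<Rightarrow> nat \<Rightarrow> 'a set set" where
  "fluo_gen M T X Xp Yp k =
     (\<Union>t\<in>{0..T}. {X k t -` A \<inter> space M | A. True})
     \<union> (\<Union>t\<in>{1..T}. {Xp k t -` A \<inter> space M | A. True} \<union> {Yp k t -` A \<inter> space M | A. True})"

definition src_sigma :: "'a measure \<Rightarrow> nat \<Rightarrow> (nat \<Rightarrow> nat \<Rightarrow> 'a \<Rightarrow> nat) \<Rightarrow> (nat \<Rightarrow> nat \<Rightarrow> 'a \<Rightarrow> nat)
                        \<Rightarrow> (nat \<Rightarrow> nat \<Rightarrow> 'a \<Rightarrow> nat) \<Rightarrow> (nat \<Rightarrow> nat \<Rightarrow> 'a \<Rightarrow> real) \<Rightarrow> (nat \<Rightarrow> 'a \<Rightarrow> real)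
                        \<Rightarrow> src \<Rightarrow> 'a set set" where
  "src_sigma M T X Xp Yp U eps i = (case i of
       Fluo k \<Rightarrow> sigma_sets (space M) (fluo_gen M T X Xp Yp k)
     | Unoise t k \<Rightarrow> {U t k -` A \<inter> space M | A. A \<in> sets borel}
     | Enoise t \<Rightarrow> {eps t -` A \<inter> space M | A. A \<in> sets borel})"

definition src_index :: "nat \<Rightarrow> nat \<Rightarrow> src set" where
  "src_index m T = Fluo ` {1..m} \<union> {Unoise t k | t k. 1 \<le> t \<and> 1 \<le> k} \<union> Enoise ` {1..T}"

definition covar :: "'a measure \<Rightarrow> ('a \<Rightarrow> real) \<Rightarrow> ('a \<Rightarrow> real) \<Rightarrow> real" where
  "covar M X Y = integral\<^sup>L M (\<lambda>\<omega>. (X \<omega> - integral\<^sup>L M X) * (Y \<omega> - integral\<^sup>L M Y))"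

end

theory Submission
  imports Defs
begin


lemma sum_PiE_insert:
  assumes "a \<notin> A" "finite A" "\<And>i. finite (B i)"
  shows "(\<Sum>f\<in>PiE (insert a A) B. g f) = (\<Sum>b\<in>B a. \<Sum>f\<in>PiE A B. g (f(a:=b)))"
proof -
  have "(\<Sum>f\<in>PiE (insert a A) B. g f) = (\<Sum>p\<in>B a \<times> PiE A B. g ((\<lambda>(y, h). h(a := y)) p))"
    unfolding PiE_insert_eq by (subst sum.reindex[OF inj_combinator[OF assms(1)]]) auto
  also have "\<dots> = (\<Sum>b\<in>B a. \<Sum>f\<in>PiE A B. g (f(a:=b)))"
    by (simp add: sum.cartesian_product case_prod_unfold)
  finally show ?thesis .
qed

definition stepf :: "nat \<Rightarrow> (nat \<Rightarrow> nat \<Rightarrow> real) \<Rightarrow> (nat \<Rightarrow> nat \<Rightarrow> real) \<Rightarrow> (nat \<Rightarrow> real) \<Rightarrow> nat \<Rightarrow> real" where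
  "stepf r q \<phi> v z = (\<Sum>y\<le>r. \<Sum>x'\<le>r. v y * (Ml r q x' y * Ms q z x' * \<phi> z x'))"

fun chainf :: "nat \<Rightarrow> (nat \<Rightarrow> nat \<Rightarrow> real) \<Rightarrow> (nat \<Rightarrow> nat \<Rightarrow> nat \<Rightarrow> real) \<Rightarrow> (nat \<Rightarrow> real) \<Rightarrow> nat \<Rightarrow> nat \<Rightarrow> real" where
  "chainf r q \<Phi> v 0 = v"
| "chainf r q \<Phi> v (Suc n) = stepf r q (\<Phi> (Suc n)) (chainf r q \<Phi> v n)"

lemma path_sum:
  "(\<Sum>xs\<in>PiE {..n} (\<lambda>_. {..r}). \<Sum>xps\<in>PiE {1..n} (\<lambda>_. {..r}).
      v (xs 0) * (\<Prod>t\<in>{1..n}. Ml r q (xps t) (xs (t-1)) * Ms q (xs t) (xps t) * \<Phi> t (xs t) (xps t)) * f (xs n))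
   = (\<Sum>z\<le>r. chainf r q \<Phi> v n z * f z)"
proof (induction n arbitrary: f)
  case 0
  have "{..0::nat} = insert 0 {}" by auto
  then show ?case by (simp add: sum_PiE_insert)
next
  case (Suc n)
  let ?G = "\<lambda>t y x' z. Ml r q x' y * Ms q z x' * \<Phi> t z x'"
  have e1: "{..Suc n} = insert (Suc n) {..n}" by auto
  have e2: "{1..Suc n} = insert (Suc n) {1..n}" by auto
  have "(\<Sum>xs\<in>PiE {..Suc n} (\<lambda>_. {..r}). \<Sum>xps\<in>PiE {1..Suc n} (\<lambda>_. {..r}).
      v (xs 0) * (\<Prod>t\<in>{1..Suc n}. ?G t (xs (t-1)) (xps t) (xs t)) * f (xs (Suc n)))
    = (\<Sum>z\<le>r. \<Sum>xs\<in>PiE {..n} (\<lambda>_. {..r}). \<Sum>x'\<le>r. \<Sum>xps\<in>PiE {1..n} (\<lambda>_. {..r}).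
      v ((xs(Suc n := z)) 0) * (\<Prod>t\<in>{1..Suc n}. ?G t ((xs(Suc n := z)) (t-1)) ((xps(Suc n := x')) t) ((xs(Suc n := z)) t)) * f z)"
    unfolding e1 e2 by (simp add: sum_PiE_insert)
  also have "\<dots> = (\<Sum>z\<le>r. \<Sum>x'\<le>r. \<Sum>xs\<in>PiE {..n} (\<lambda>_. {..r}). \<Sum>xps\<in>PiE {1..n} (\<lambda>_. {..r}).
      v (xs 0) * (\<Prod>t\<in>{1..n}. ?G t (xs (t-1)) (xps t) (xs t)) * (?G (Suc n) (xs n) x' z * f z))"
  proof (intro sum.cong refl, subst sum.swap, intro sum.cong refl)
    fix z x' xs xps
    have "(\<Prod>t\<in>{1..Suc n}. ?G t ((xs(Suc n := z)) (t-1)) ((xps(Suc n := x')) t) ((xs(Suc n := z)) t))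
       = ?G (Suc n) (xs n) x' z * (\<Prod>t\<in>{1..n}. ?G t (xs (t-1)) (xps t) (xs t))"
      unfolding e2 by (subst prod.insert) (auto intro!: prod.cong)
    note h = this
    show "v ((xs(Suc n := z)) 0) * (\<Prod>t\<in>{1..Suc n}. ?G t ((xs(Suc n := z)) (t-1)) ((xps(Suc n := x')) t) ((xs(Suc n := z)) t)) * f z
      = v (xs 0) * (\<Prod>t\<in>{1..n}. ?G t (xs (t-1)) (xps t) (xs t)) * (?G (Suc n) (xs n) x' z * f z)"
      by (subst h) (simp add: mult_ac)
  qed
  also have "\<dots> = (\<Sum>z\<le>r. \<Sum>x'\<le>r. \<Sum>y\<le>r. chainf r q \<Phi> v n y * (?G (Suc n) y x' z * f z))"
  proof (intro sum.cong refl)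
    fix z x' show "(\<Sum>xs\<in>PiE {..n} (\<lambda>_. {..r}). \<Sum>xps\<in>PiE {1..n} (\<lambda>_. {..r}).
      v (xs 0) * (\<Prod>t\<in>{1..n}. ?G t (xs (t-1)) (xps t) (xs t)) * (?G (Suc n) (xs n) x' z * f z))
      = (\<Sum>y\<le>r. chainf r q \<Phi> v n y * (?G (Suc n) y x' z * f z))"
      by (rule Suc.IH[of "\<lambda>y. ?G (Suc n) y x' z * f z"])
  qed
  also have "\<dots> = (\<Sum>z\<le>r. chainf r q \<Phi> v (Suc n) z * f z)"
    by (intro sum.cong refl, subst sum.swap) (simp add: stepf_def sum_distrib_left sum_distrib_right mult_ac)
  finally show ?case by simp
qed


lemma Ml_nonneg:
  assumes "\<And>x z. x \<le> r \<Longrightarrow> z \<le> r - 1 \<Longrightarrow> 0 \<le> q x z \<and> q x z \<le> 1" "x \<le> r" "y \<le> r"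
  shows "0 \<le> Ml r q x y"
  using assms unfolding Ml_def by auto

lemma Ms_nonneg:
  assumes "\<And>x z. x \<le> r \<Longrightarrow> z \<le> r - 1 \<Longrightarrow> 0 \<le> q x z \<and> q x z \<le> 1" "z \<le> r"
  shows "0 \<le> Ms q z x'"
  using assms unfolding Ms_def by auto

lemma Ml_colsum:
  assumes "\<And>z. z \<le> r - 1 \<Longrightarrow> (\<Sum>x\<le>r. q x z) = 1" "y \<le> r"
  shows "(\<Sum>x'\<le>r. Ml r q x' y) = 1"
proof -
  have "(\<Sum>x'\<le>r. Ml r q x' y) = (if y = 0 then (\<Sum>x'\<le>r. if x' = 0 then 1 else 0)
        else if y = r then (\<Sum>x'\<le>r. if x' = r then 1 else 0) else (\<Sum>x'\<le>r. q x' y))"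
    unfolding Ml_def by auto
  also have "\<dots> = 1" using assms by (auto simp: sum.delta)
  finally show ?thesis .
qed

lemma Ms_colsum:
  assumes "\<And>z. z \<le> r - 1 \<Longrightarrow> (\<Sum>x\<le>r. q x z) = 1" "x' \<le> r"
  shows "(\<Sum>z\<le>r. Ms q z x') = 1"
proof (cases "x' = 0")
  case True then show ?thesis using assms(1)[of 0] by (simp add: Ms_def)
next
  case False
  then have "(\<Sum>z\<le>r. Ms q z x') = (\<Sum>z\<le>r. if z = x' then 1 else 0)"
    unfolding Ms_def by (intro sum.cong) auto
  then show ?thesis using assms(2) by (simp add: sum.delta)
qed

lemma Ms_row0: "Ms q 0 x' = (if x' = 0 then q 0 0 else 0)"
  unfolding Ms_def by auto

definition one3 :: "nat \<Rightarrow> nat \<Rightarrow> nat \<Rightarrow> real" where "one3 = (\<lambda>_ _ _. 1)"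

lemma step_mass:
  assumes "\<And>z. z \<le> r - 1 \<Longrightarrow> (\<Sum>x\<le>r. q x z) = 1"
  shows "(\<Sum>z\<le>r. stepf r q (\<lambda>_ _. 1) v z) = (\<Sum>y\<le>r. v y)"
proof -
  have "(\<Sum>z\<le>r. stepf r q (\<lambda>_ _. 1) v z) = (\<Sum>y\<le>r. \<Sum>z\<le>r. \<Sum>x'\<le>r. v y * (Ml r q x' y * Ms q z x'))"
    unfolding stepf_def by (simp, rule sum.swap)
  also have "\<dots> = (\<Sum>y\<le>r. \<Sum>x'\<le>r. \<Sum>z\<le>r. v y * (Ml r q x' y * Ms q z x'))"
    by (rule sum.cong[OF refl], rule sum.swap)
  also have "\<dots> = (\<Sum>y\<le>r. v y * (\<Sum>x'\<le>r. Ml r q x' y * (\<Sum>z\<le>r. Ms q z x')))"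
    by (simp add: sum_distrib_left)
  also have "\<dots> = (\<Sum>y\<le>r. v y)"
    using assms by (simp add: Ms_colsum Ml_colsum)
  finally show ?thesis .
qed

lemma chain_shift:
  "chainf r q \<Phi> v (a + b) = chainf r q (\<lambda>s. \<Phi> (s + a)) (chainf r q \<Phi> v a) b"
  by (induction b) (simp_all add: add.commute)

lemma chain_cong:
  "(\<And>s. 1 \<le> s \<Longrightarrow> s \<le> n \<Longrightarrow> \<Phi> s = \<Phi>' s) \<Longrightarrow> chainf r q \<Phi> v n = chainf r q \<Phi>' v n"
  by (induction n) auto

lemma mass_tail:
  assumes "\<And>z. z \<le> r - 1 \<Longrightarrow> (\<Sum>x\<le>r. q x z) = 1"
    and "\<And>s. n < s \<Longrightarrow> s \<le> N \<Longrightarrow> \<Phi> s = (\<lambda>_ _. 1)" "n \<le> N"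
  shows "(\<Sum>z\<le>r. chainf r q \<Phi> v N z) = (\<Sum>z\<le>r. chainf r q \<Phi> v n z)"
  using assms(2,3)
proof (induction N)
  case 0 then show ?case by simp
next
  case (Suc N)
  show ?case
  proof (cases "n = Suc N")
    case False
    then have "n \<le> N" using Suc by auto
    have "(\<Sum>z\<le>r. chainf r q \<Phi> v (Suc N) z) = (\<Sum>z\<le>r. chainf r q \<Phi> v N z)"
      using Suc.prems \<open>n \<le> N\<close> by (simp add: step_mass[OF assms(1)])
    also have "\<dots> = (\<Sum>z\<le>r. chainf r q \<Phi> v n z)"
      using Suc \<open>n \<le> N\<close> by auto
    finally show ?thesis .
  qed simp
qed

lemma step_emis:
  assumes "\<And>z x'. x' \<noteq> 0 \<Longrightarrow> \<phi> z x' = 0"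
  shows "(\<Sum>z\<le>r. stepf r q \<phi> v z) = (\<Sum>z\<le>r. Ms q z 0 * \<phi> z 0) * (\<Sum>y\<le>r. v y * Ml r q 0 y)"
proof -
  have "(\<Sum>z\<le>r. stepf r q \<phi> v z) = (\<Sum>z\<le>r. \<Sum>y\<le>r. v y * (Ml r q 0 y * Ms q z 0 * \<phi> z 0))"
    unfolding stepf_def
  proof (intro sum.cong refl)
    fix z y
    have "(\<Sum>x'\<le>r. v y * (Ml r q x' y * Ms q z x' * \<phi> z x')) = (\<Sum>x'\<le>r. if x' = 0 then v y * (Ml r q 0 y * Ms q z 0 * \<phi> z 0) else 0)"
      using assms by (intro sum.cong) auto
    then show "(\<Sum>x'\<le>r. v y * (Ml r q x' y * Ms q z x' * \<phi> z x')) = v y * (Ml r q 0 y * Ms q z 0 * \<phi> z 0)"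
      by (simp add: sum.delta)
  qed
  then show ?thesis by (simp add: sum_distrib_left sum_distrib_right mult_ac)
qed

lemma step1_row0:
  "stepf r q (\<lambda>_ _. 1) v 0 = q 0 0 * (\<Sum>y\<le>r. v y * Ml r q 0 y)"
proof -
  have "stepf r q (\<lambda>_ _. 1) v 0 = (\<Sum>y\<le>r. \<Sum>x'\<le>r. if x' = 0 then v y * Ml r q 0 y * q 0 0 else 0)"
    unfolding stepf_def Ms_row0 by (intro sum.cong refl) auto
  then show ?thesis by (simp add: sum.delta sum_distrib_left mult_ac)
qed

lemma step1_Mmat:
  "stepf r q (\<lambda>_ _. 1) v z = (\<Sum>y\<le>r. Mmat r q z y * v y)"
  unfolding stepf_def Mmat_def sum_distrib_right
  by (intro sum.cong refl) (simp add: mult_ac)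

lemma Mmat_col0: "Mmat r q w 0 = Ms q w 0"
proof -
  have "Mmat r q w 0 = (\<Sum>y\<le>r. if y = 0 then Ms q w 0 else 0)"
    unfolding Mmat_def Ml_def by (intro sum.cong) auto
  then show ?thesis by (simp add: sum.delta)
qed

lemma chain_diag:
  fixes V Vinv :: "nat \<Rightarrow> nat \<Rightarrow> complex" and lam :: "nat \<Rightarrow> complex"
  assumes V_inv1: "\<And>i j. i \<le> r \<Longrightarrow> j \<le> r \<Longrightarrow> (\<Sum>k\<le>r. V i k * Vinv k j) = (if i = j then 1 else 0)"
    and V_inv2: "\<And>i j. i \<le> r \<Longrightarrow> j \<le> r \<Longrightarrow> (\<Sum>k\<le>r. Vinv i k * V k j) = (if i = j then 1 else 0)"
    and diag: "\<And>x z. x \<le> r \<Longrightarrow> z \<le> r \<Longrightarrow>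
                 complex_of_real (Mmat r q x z) = (\<Sum>y\<le>r. V x y * lam y * Vinv y z)"
    and "z \<le> r"
  shows "complex_of_real (chainf r q (\<lambda>_ _ _. 1) v n z)
     = (\<Sum>x\<le>r. V z x * lam x ^ n * (\<Sum>w\<le>r. Vinv x w * complex_of_real (v w)))"
  using \<open>z \<le> r\<close>
proof (induction n arbitrary: z)
  case 0
  have "(\<Sum>x\<le>r. V z x * lam x ^ 0 * (\<Sum>w\<le>r. Vinv x w * complex_of_real (v w)))
     = (\<Sum>w\<le>r. (\<Sum>x\<le>r. V z x * Vinv x w) * complex_of_real (v w))"
    by (simp add: sum_distrib_left sum_distrib_right mult_ac) (rule sum.swap)
  also have "\<dots> = (\<Sum>w\<le>r. if z = w then complex_of_real (v w) else 0)"
    using 0 by (intro sum.cong) (auto simp: V_inv1)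
  also have "\<dots> = complex_of_real (v z)" using 0 by (simp add: sum.delta)
  finally show ?case by simp
next
  case (Suc n)
  define c where "c x = (\<Sum>w\<le>r. Vinv x w * complex_of_real (v w))" for x
  have IH: "\<And>y. y \<le> r \<Longrightarrow> complex_of_real (chainf r q (\<lambda>_ _ _. 1) v n y) = (\<Sum>x\<le>r. V y x * lam x ^ n * c x)"
    using Suc.IH unfolding c_def by auto
  have "complex_of_real (chainf r q (\<lambda>_ _ _. 1) v (Suc n) z)
      = (\<Sum>y\<le>r. complex_of_real (Mmat r q z y) * complex_of_real (chainf r q (\<lambda>_ _ _. 1) v n y))"
    by (simp add: step1_Mmat)
  also have "\<dots> = (\<Sum>y\<le>r. (\<Sum>a\<le>r. V z a * lam a * Vinv a y) * (\<Sum>x\<le>r. V y x * lam x ^ n * c x))"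
    using Suc.prems by (intro sum.cong refl) (simp add: diag IH)
  also have "\<dots> = (\<Sum>a\<le>r. V z a * lam a * (\<Sum>x\<le>r. (\<Sum>y\<le>r. Vinv a y * V y x) * (lam x ^ n * c x)))"
  proof -
    have "(\<Sum>y\<le>r. (\<Sum>a\<le>r. V z a * lam a * Vinv a y) * (\<Sum>x\<le>r. V y x * lam x ^ n * c x))
        = (\<Sum>y\<le>r. \<Sum>a\<le>r. \<Sum>x\<le>r. V z a * lam a * (Vinv a y * V y x) * (lam x ^ n * c x))"
      by (simp add: sum_product mult_ac)
    also have "\<dots> = (\<Sum>a\<le>r. \<Sum>y\<le>r. \<Sum>x\<le>r. V z a * lam a * (Vinv a y * V y x) * (lam x ^ n * c x))"
      by (rule sum.swap)
    also have "\<dots> = (\<Sum>a\<le>r. \<Sum>x\<le>r. \<Sum>y\<le>r. V z a * lam a * (Vinv a y * V y x) * (lam x ^ n * c x))"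
      by (rule sum.cong[OF refl], rule sum.swap)
    also have "\<dots> = (\<Sum>a\<le>r. V z a * lam a * (\<Sum>x\<le>r. (\<Sum>y\<le>r. Vinv a y * V y x) * (lam x ^ n * c x)))"
      by (simp add: sum_distrib_left sum_distrib_right mult_ac)
    finally show ?thesis .
  qed
  also have "\<dots> = (\<Sum>a\<le>r. V z a * lam a * (\<Sum>x\<le>r. if a = x then lam x ^ n * c x else 0))"
    by (intro sum.cong refl arg_cong2[where f="(*)"]) (auto simp: V_inv2)
  also have "\<dots> = (\<Sum>x\<le>r. V z x * lam x ^ Suc n * c x)"
    by (intro sum.cong refl) (simp add: mult_ac)
  finally show ?case unfolding c_def .
qed


lemma ennsuminf_sum:
  fixes f :: "'i \<Rightarrow> nat \<Rightarrow> ennreal"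
  assumes "finite I"
  shows "(\<Sum>a. \<Sum>i\<in>I. f i a) = (\<Sum>i\<in>I. \<Sum>a. f i a)"
proof -
  have "(\<Sum>a. \<Sum>i\<in>I. f i a) = (\<integral>\<^sup>+a. (\<Sum>i\<in>I. f i a) \<partial>count_space UNIV)"
    by (simp add: nn_integral_count_space_nat)
  also have "\<dots> = (\<Sum>i\<in>I. \<integral>\<^sup>+a. f i a \<partial>count_space UNIV)"
    by (rule nn_integral_sum) auto
  also have "\<dots> = (\<Sum>i\<in>I. \<Sum>a. f i a)"
    by (simp add: nn_integral_count_space_nat)
  finally show ?thesis .
qed

lemma ennreal_suminf_prod:
  fixes c :: ennreal
  shows "(\<Sum>a. \<Sum>b. c * (f a * g b)) = c * ((\<Sum>a. f a) * (\<Sum>b. g b))"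
proof -
  have "(\<Sum>b. c * (f a * g b)) = (c * f a) * (\<Sum>b. g b)" for a
    by (subst ennreal_suminf_cmult[symmetric]) (simp add: mult.assoc)
  then have "(\<Sum>a. \<Sum>b. c * (f a * g b)) = (\<Sum>a. c * f a) * (\<Sum>b. g b)"
    by simp
  then show ?thesis by (simp add: mult.assoc)
qed

lemma pmf_sums_1: "(\<lambda>n::nat. pmf p n) sums 1"
proof -
  have "(\<lambda>n. measure (measure_pmf p) {n}) sums measure (measure_pmf p) (\<Union>n. {n})"
    by (rule measure_UNION) (auto simp: disjoint_family_on_def)
  then show ?thesis by (simp add: measure_pmf_single)
qed

lemma nn_integral_nat_rv:
  fixes f :: "nat \<Rightarrow> ennreal"
  assumes Y: "Y \<in> measurable M (count_space UNIV)" and A: "A \<in> sets M"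
  shows "(\<integral>\<^sup>+\<omega>. f (Y \<omega>) * indicator A \<omega> \<partial>M) = (\<Sum>a. f a * emeasure M (A \<inter> {\<omega>\<in>space M. Y \<omega> = a}))"
proof -
  have mY: "{\<omega>\<in>space M. Y \<omega> = a} \<in> sets M" for a
    using Y by measurable
  have "(\<integral>\<^sup>+\<omega>. f (Y \<omega>) * indicator A \<omega> \<partial>M) = (\<integral>\<^sup>+\<omega>. (\<Sum>a. f a * indicator (A \<inter> {\<omega>\<in>space M. Y \<omega> = a}) \<omega>) \<partial>M)"
  proof (rule nn_integral_cong)
    fix \<omega> assume "\<omega> \<in> space M"
    have "(\<lambda>a. f a * indicator (A \<inter> {\<omega>\<in>space M. Y \<omega> = a}) \<omega>) = (\<lambda>a. if a = Y \<omega> then f a * indicator A \<omega> else 0)"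
      using \<open>\<omega> \<in> space M\<close> by (auto simp: indicator_def)
    then show "f (Y \<omega>) * indicator A \<omega> = (\<Sum>a. f a * indicator (A \<inter> {\<omega>\<in>space M. Y \<omega> = a}) \<omega>)"
      using sums_single[of "Y \<omega>" "\<lambda>a. f a * indicator A \<omega>"] by (simp add: sums_iff)
  qed
  also have "\<dots> = (\<Sum>a. \<integral>\<^sup>+\<omega>. f a * indicator (A \<inter> {\<omega>\<in>space M. Y \<omega> = a}) \<omega> \<partial>M)"
    by (rule nn_integral_suminf) (use A mY in auto)
  also have "\<dots> = (\<Sum>a. f a * emeasure M (A \<inter> {\<omega>\<in>space M. Y \<omega> = a}))"
    using A mY by (subst nn_integral_cmult_indicator) auto
  finally show ?thesis .
qed


lemma pmf_nn: "(\<integral>\<^sup>+x. ennreal (h x) \<partial>measure_pmf p) = (\<Sum>a. ennreal (pmf p a) * ennreal (h a))"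
  for p :: "nat pmf"
  by (simp add: nn_integral_measure_pmf nn_integral_count_space_nat)

lemma pmf_nn_int:
  fixes p :: "nat pmf"
  assumes "integrable (measure_pmf p) h" "\<And>x. 0 \<le> h x"
  shows "(\<Sum>a. ennreal (pmf p a) * ennreal (h a)) = ennreal (\<integral>x. h x \<partial>p)"
  using nn_integral_eq_integral[of "measure_pmf p" h] assms by (simp add: pmf_nn)

locale fluo = prob_space M
  for M :: "'a measure" +
  fixes r T :: nat and q :: "nat \<Rightarrow> nat \<Rightarrow> real" and \<nu> :: "nat \<Rightarrow> real"
    and p00 p10 :: "nat pmf" and X Xp Yp :: "nat \<Rightarrow> 'a \<Rightarrow> nat"
  assumes r1: "1 \<le> r" and T1: "1 \<le> T"
    and q_range: "\<And>x z. x \<le> r \<Longrightarrow> z \<le> r - 1 \<Longrightarrow> 0 \<le> q x z \<and> q x z \<le> 1"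
    and q_sum: "\<And>z. z \<le> r - 1 \<Longrightarrow> (\<Sum>x\<le>r. q x z) = 1"
    and nu_nonneg: "\<And>z. z \<le> r \<Longrightarrow> 0 \<le> \<nu> z"
    and nu_sum: "(\<Sum>z\<le>r. \<nu> z) = 1"
    and X_meas[measurable]: "\<And>t. X t \<in> measurable M (count_space UNIV)"
    and Xp_meas[measurable]: "\<And>t. Xp t \<in> measurable M (count_space UNIV)"
    and Yp_meas[measurable]: "\<And>t. Yp t \<in> measurable M (count_space UNIV)"
    and law: "\<And>xs xps ys. (\<forall>t\<le>T. xs t \<le> r) \<Longrightarrow> (\<forall>t\<in>{1..T}. xps t \<le> r) \<Longrightarrow>
       measure M {\<omega> \<in> space M. \<forall>t\<le>T. X t \<omega> = xs t \<and>
                      (1 \<le> t \<longrightarrow> Xp t \<omega> = xps t \<and> Yp t \<omega> = ys t)}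
       = \<nu> (xs 0) * (\<Prod>t\<in>{1..T}. Ml r q (xps t) (xs (t - 1)) * Ms q (xs t) (xps t)
                                 * pmf (emis p00 p10 (xs t) (xps t)) (ys t))"
    and mom1: "integrable (measure_pmf p00) real" "integrable (measure_pmf p10) real"
    and mom2: "integrable (measure_pmf p00) (\<lambda>n. (real n)\<^sup>2)" "integrable (measure_pmf p10) (\<lambda>n. (real n)\<^sup>2)"
begin

definition Paths :: "((nat \<Rightarrow> nat) \<times> (nat \<Rightarrow> nat)) set" where
  "Paths = PiE {..T} (\<lambda>_. {..r}) \<times> PiE {1..T} (\<lambda>_. {..r})"

definition Cp :: "(nat \<Rightarrow> nat) \<times> (nat \<Rightarrow> nat) \<Rightarrow> 'a set" where
  "Cp p = {\<omega> \<in> space M. \<forall>t\<le>T. X t \<omega> = fst p t \<and> (1 \<le> t \<longrightarrow> Xp t \<omega> = snd p t)}"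

definition Wp :: "(nat \<Rightarrow> nat) \<times> (nat \<Rightarrow> nat) \<Rightarrow> real" where
  "Wp p = \<nu> (fst p 0) * (\<Prod>t\<in>{1..T}. Ml r q (snd p t) (fst p (t - 1)) * Ms q (fst p t) (snd p t))"

definition emp :: "(nat \<Rightarrow> nat) \<times> (nat \<Rightarrow> nat) \<Rightarrow> nat \<Rightarrow> nat pmf" where
  "emp p t = emis p00 p10 (fst p t) (snd p t)"

lemma finite_Paths: "finite Paths"
  unfolding Paths_def by (auto intro!: finite_PiE)

lemma Cp_sets[measurable]: "Cp p \<in> sets M"
  unfolding Cp_def by measurable

lemma Cp_space: "\<omega> \<in> Cp p \<Longrightarrow> \<omega> \<in> space M"
  unfolding Cp_def by simp

lemma Wp_nonneg: "p \<in> Paths \<Longrightarrow> 0 \<le> Wp p"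
  unfolding Wp_def Paths_def
  by (auto intro!: mult_nonneg_nonneg prod_nonneg nu_nonneg Ml_nonneg[OF q_range] Ms_nonneg[OF q_range]
           simp: PiE_iff)

lemma marg_aux:
  assumes p: "p \<in> Paths" and D: "finite D" "D \<subseteq> {1..T}"
  shows "measure M (Cp p \<inter> {\<omega>. \<forall>s\<in>{1..T} - D. Yp s \<omega> = ys s})
       = Wp p * (\<Prod>s\<in>{1..T} - D. pmf (emp p s) (ys s))"
  using D
proof (induction D arbitrary: ys rule: finite_induct)
  case empty
  have "Cp p \<inter> {\<omega>. \<forall>s\<in>{1..T}. Yp s \<omega> = ys s}
      = {\<omega> \<in> space M. \<forall>t\<le>T. X t \<omega> = fst p t \<and> (1 \<le> t \<longrightarrow> Xp t \<omega> = snd p t \<and> Yp t \<omega> = ys t)}"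
    unfolding Cp_def by auto
  moreover have "(\<forall>t\<le>T. fst p t \<le> r)" "(\<forall>t\<in>{1..T}. snd p t \<le> r)"
    using p unfolding Paths_def by (auto simp: PiE_iff)
  ultimately show ?case using law[of "fst p" "snd p" ys]
    by (simp add: Wp_def emp_def prod.distrib mult_ac)
next
  case (insert d D)
  let ?S = "{1..T} - insert d D"
  let ?E = "\<lambda>ys. Cp p \<inter> {\<omega>. \<forall>s\<in>{1..T} - D. Yp s \<omega> = ys s}"
  have d: "d \<in> {1..T}" "d \<notin> D" using insert by auto
  have S': "{1..T} - D = insert d ?S" using d by auto
  have un: "Cp p \<inter> {\<omega>. \<forall>s\<in>?S. Yp s \<omega> = ys s} = (\<Union>y. ?E (ys(d := y)))"
  proof (rule set_eqI, rule iffI)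
    fix \<omega> assume "\<omega> \<in> Cp p \<inter> {\<omega>. \<forall>s\<in>?S. Yp s \<omega> = ys s}"
    then have "\<omega> \<in> ?E (ys(d := Yp d \<omega>))" unfolding S' by auto
    then show "\<omega> \<in> (\<Union>y. ?E (ys(d := y)))" by blast
  next
    fix \<omega> assume "\<omega> \<in> (\<Union>y. ?E (ys(d := y)))"
    then obtain y where "\<omega> \<in> ?E (ys(d := y))" by blast
    then show "\<omega> \<in> Cp p \<inter> {\<omega>. \<forall>s\<in>?S. Yp s \<omega> = ys s}" unfolding S' by auto
  qed
  have A: "(\<lambda>y. measure M (?E (ys(d := y)))) sums measure M (\<Union>y. ?E (ys(d := y)))"
  proof (rule measure_UNION)
    show "range (\<lambda>y. ?E (ys(d := y))) \<subseteq> sets M"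
    proof safe
      fix y
      have "?E (ys(d := y)) = Cp p \<inter> {\<omega>\<in>space M. \<forall>s\<in>{1..T} - D. Yp s \<omega> = (ys(d := y)) s}"
        using Cp_def by auto
      also have "\<dots> \<in> sets M" by measurable
      finally show "?E (ys(d := y)) \<in> sets M" .
    qed
    show "disjoint_family (\<lambda>y. ?E (ys(d := y)))"
    unfolding disjoint_family_on_def proof (intro ballI impI)
      fix y y' :: nat assume "y \<in> UNIV" "y' \<in> UNIV" "y \<noteq> y'"
      have "d \<in> {1..T} - D" using d by auto
      have key: "Yp d \<omega> = z" if "\<omega> \<in> ?E (ys(d := z))" for \<omega> z
      proof -
        from that have "\<forall>s\<in>{1..T} - D. Yp s \<omega> = (ys(d := z)) s" by blast
        then have "Yp d \<omega> = (ys(d := z)) d" using \<open>d \<in> {1..T} - D\<close> by blast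
        then show ?thesis by simp
      qed
      show "?E (ys(d := y)) \<inter> ?E (ys(d := y')) = {}" using \<open>y \<noteq> y'\<close> key[of _ y] key[of _ y'] by blast
    qed
  qed (simp add: emeasure_eq_measure)
  have B: "(\<lambda>y. measure M (?E (ys(d := y)))) = (\<lambda>y. (Wp p * (\<Prod>s\<in>?S. pmf (emp p s) (ys s))) * pmf (emp p d) y)"
  proof
    fix y
    have "measure M (?E (ys(d := y))) = Wp p * (\<Prod>s\<in>{1..T} - D. pmf (emp p s) ((ys(d := y)) s))"
      using insert.prems by (intro insert.IH) auto
    also have "\<dots> = Wp p * (pmf (emp p d) y * (\<Prod>s\<in>?S. pmf (emp p s) (ys s)))"
      unfolding S' by (subst prod.insert) (auto intro!: prod.cong)
    finally show "measure M (?E (ys(d := y))) = (Wp p * (\<Prod>s\<in>?S. pmf (emp p s) (ys s))) * pmf (emp p d) y"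
      by (simp add: mult_ac)
  qed
  have "(\<lambda>y. (Wp p * (\<Prod>s\<in>?S. pmf (emp p s) (ys s))) * pmf (emp p d) y) sums measure M (Cp p \<inter> {\<omega>. \<forall>s\<in>?S. Yp s \<omega> = ys s})"
    using A by (simp only: B un)
  moreover have "(\<lambda>y. (Wp p * (\<Prod>s\<in>?S. pmf (emp p s) (ys s))) * pmf (emp p d) y) sums (Wp p * (\<Prod>s\<in>?S. pmf (emp p s) (ys s)))"
    using sums_mult[OF pmf_sums_1[of "emp p d"], of "Wp p * (\<Prod>s\<in>?S. pmf (emp p s) (ys s))"] by simp
  ultimately have "measure M (Cp p \<inter> {\<omega>. \<forall>s\<in>?S. Yp s \<omega> = ys s}) = Wp p * (\<Prod>s\<in>?S. pmf (emp p s) (ys s))"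
    by (rule sums_unique2)
  then show ?case .
qed

lemma marg:
  assumes p: "p \<in> Paths" and S: "S \<subseteq> {1..T}"
  shows "measure M (Cp p \<inter> {\<omega>. \<forall>s\<in>S. Yp s \<omega> = ys s}) = Wp p * (\<Prod>s\<in>S. pmf (emp p s) (ys s))"
proof -
  have "{1..T} - ({1..T} - S) = S" using S by auto
  then show ?thesis using marg_aux[OF p, of "{1..T} - S" ys] by simp
qed


lemma paths_sum: "(\<Sum>p\<in>Paths. g p) = (\<Sum>xs\<in>PiE {..T} (\<lambda>_. {..r}). \<Sum>xps\<in>PiE {1..T} (\<lambda>_. {..r}). g (xs, xps))"
  unfolding Paths_def by (simp add: sum.cartesian_product)

lemma Wp_prod_sum:
  "(\<Sum>p\<in>Paths. Wp p * (\<Prod>s\<in>{1..T}. \<Phi> s (fst p s) (snd p s))) = (\<Sum>z\<le>r. chainf r q \<Phi> \<nu> T z)"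
proof -
  have "(\<Sum>p\<in>Paths. Wp p * (\<Prod>s\<in>{1..T}. \<Phi> s (fst p s) (snd p s)))
     = (\<Sum>xs\<in>PiE {..T} (\<lambda>_. {..r}). \<Sum>xps\<in>PiE {1..T} (\<lambda>_. {..r}).
      \<nu> (xs 0) * (\<Prod>t\<in>{1..T}. Ml r q (xps t) (xs (t-1)) * Ms q (xs t) (xps t) * \<Phi> t (xs t) (xps t)) * (\<lambda>_. 1) (xs T))"
    unfolding paths_sum Wp_def by (simp add: prod.distrib mult_ac)
  also have "\<dots> = (\<Sum>z\<le>r. chainf r q \<Phi> \<nu> T z * (\<lambda>_. 1) z)"
    by (rule path_sum)
  finally show ?thesis by simp
qed

lemma Wp_sum: "(\<Sum>p\<in>Paths. Wp p) = 1"
proof -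
  have "(\<Sum>p\<in>Paths. Wp p) = (\<Sum>p\<in>Paths. Wp p * (\<Prod>s\<in>{1..T}. (\<lambda>_ _ _. 1::real) s (fst p s) (snd p s)))"
    by simp
  also have "\<dots> = (\<Sum>z\<le>r. chainf r q (\<lambda>_ _ _. 1) \<nu> T z)"
    by (rule Wp_prod_sum)
  also have "\<dots> = (\<Sum>z\<le>r. chainf r q (\<lambda>_ _ _. 1) \<nu> 0 z)"
    by (rule mass_tail[OF q_sum]) auto
  finally show ?thesis using nu_sum by simp
qed

lemma Cp_disj: "disjoint_family_on (\<lambda>p. A \<inter> Cp p) Paths"
  unfolding disjoint_family_on_def
proof (intro ballI impI)
  fix p p' assume pp: "p \<in> Paths" "p' \<in> Paths" "p \<noteq> p'"
  show "(A \<inter> Cp p) \<inter> (A \<inter> Cp p') = {}"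
  proof (rule ccontr)
    assume "(A \<inter> Cp p) \<inter> (A \<inter> Cp p') \<noteq> {}"
    then obtain \<omega> where w: "\<omega> \<in> Cp p" "\<omega> \<in> Cp p'" by blast
    have "fst p = fst p'"
    proof (rule PiE_ext)
      show "fst p \<in> PiE {..T} (\<lambda>_. {..r})" "fst p' \<in> PiE {..T} (\<lambda>_. {..r})"
        using pp unfolding Paths_def by auto
      fix i assume "i \<in> {..T}"
      then have "X i \<omega> = fst p i" "X i \<omega> = fst p' i" using w unfolding Cp_def by auto
      then show "fst p i = fst p' i" by simp
    qed
    moreover have "snd p = snd p'"
    proof (rule PiE_ext)
      show "snd p \<in> PiE {1..T} (\<lambda>_. {..r})" "snd p' \<in> PiE {1..T} (\<lambda>_. {..r})"
        using pp unfolding Paths_def by auto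
      fix i assume "i \<in> {1..T}"
      then have "Xp i \<omega> = snd p i" "Xp i \<omega> = snd p' i" using w unfolding Cp_def by auto
      then show "snd p i = snd p' i" by simp
    qed
    ultimately show False using pp by (simp add: prod_eq_iff)
  qed
qed

lemma Cp_disj': "disjoint_family_on Cp Paths"
  using Cp_disj[of UNIV] by simp

lemma prob_good: "prob (\<Union>p\<in>Paths. Cp p) = 1"
proof -
  have "prob (\<Union>p\<in>Paths. space M \<inter> Cp p) = (\<Sum>p\<in>Paths. prob (space M \<inter> Cp p))"
    by (rule measure_finite_Union) (use Cp_disj[of "space M"] in \<open>auto simp: finite_Paths emeasure_eq_measure\<close>)
  also have "\<dots> = (\<Sum>p\<in>Paths. Wp p)"
  proof (rule sum.cong[OF refl])
    fix p assume "p \<in> Paths"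
    have "space M \<inter> Cp p = Cp p \<inter> {\<omega>. \<forall>s\<in>{}. Yp s \<omega> = (\<lambda>_. 0) s}"
      using Cp_space[of _ p] by auto
    then show "prob (space M \<inter> Cp p) = Wp p" using marg[OF \<open>p \<in> Paths\<close>, of "{}"] by simp
  qed
  finally show ?thesis
    using sets.sets_into_space[OF Cp_sets] Wp_sum by (simp add: Int_absorb1)
qed

lemma prob_decomp:
  assumes A: "A \<in> sets M"
  shows "prob A = (\<Sum>p\<in>Paths. prob (A \<inter> Cp p))"
proof -
  have G: "(\<Union>p\<in>Paths. Cp p) \<in> sets M" using finite_Paths by auto
  have "AE x in M. x \<in> (\<Union>p\<in>Paths. Cp p)" using prob_good AE_in_set_eq_1[OF G] by simp
  then have "AE x in M. x \<in> A \<longleftrightarrow> x \<in> (\<Union>p\<in>Paths. A \<inter> Cp p)" by auto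
  have B: "(\<Union>p\<in>Paths. A \<inter> Cp p) \<in> sets M" using finite_Paths A by (intro sets.finite_UN) auto
  have "prob A = prob (\<Union>p\<in>Paths. A \<inter> Cp p)"
    by (rule measure_eq_AE[OF _ A B]) fact
  also have "\<dots> = (\<Sum>p\<in>Paths. prob (A \<inter> Cp p))"
    by (rule measure_finite_Union) (use A in \<open>auto simp: finite_Paths Cp_disj emeasure_eq_measure\<close>)
  finally show ?thesis .
qed

lemma prob_Y1:
  assumes t: "t \<in> {1..T}"
  shows "prob {\<omega>\<in>space M. Yp t \<omega> = a} = (\<Sum>p\<in>Paths. Wp p * pmf (emp p t) a)"
proof -
  have "prob {\<omega>\<in>space M. Yp t \<omega> = a} = (\<Sum>p\<in>Paths. prob ({\<omega>\<in>space M. Yp t \<omega> = a} \<inter> Cp p))"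
    by (rule prob_decomp) measurable
  also have "\<dots> = (\<Sum>p\<in>Paths. Wp p * pmf (emp p t) a)"
  proof (rule sum.cong[OF refl])
    fix p assume p: "p \<in> Paths"
    have "{\<omega>\<in>space M. Yp t \<omega> = a} \<inter> Cp p = Cp p \<inter> {\<omega>. \<forall>s\<in>{t}. Yp s \<omega> = (\<lambda>_. a) s}"
      using Cp_space[of _ p] by auto
    then show "prob ({\<omega>\<in>space M. Yp t \<omega> = a} \<inter> Cp p) = Wp p * pmf (emp p t) a"
      using marg[OF p, of "{t}"] t by simp
  qed
  finally show ?thesis .
qed

lemma prob_Y2:
  assumes t: "t \<in> {1..T}" "t' \<in> {1..T}" "t \<noteq> t'"
  shows "prob ({\<omega>\<in>space M. Yp t \<omega> = a} \<inter> {\<omega>\<in>space M. Yp t' \<omega> = b})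
     = (\<Sum>p\<in>Paths. Wp p * pmf (emp p t) a * pmf (emp p t') b)"
proof -
  have "prob ({\<omega>\<in>space M. Yp t \<omega> = a} \<inter> {\<omega>\<in>space M. Yp t' \<omega> = b})
     = (\<Sum>p\<in>Paths. prob (({\<omega>\<in>space M. Yp t \<omega> = a} \<inter> {\<omega>\<in>space M. Yp t' \<omega> = b}) \<inter> Cp p))"
    by (rule prob_decomp) measurable
  also have "\<dots> = (\<Sum>p\<in>Paths. Wp p * pmf (emp p t) a * pmf (emp p t') b)"
  proof (rule sum.cong[OF refl])
    fix p assume p: "p \<in> Paths"
    let ?ys = "\<lambda>s. if s = t then a else b"
    have "({\<omega>\<in>space M. Yp t \<omega> = a} \<inter> {\<omega>\<in>space M. Yp t' \<omega> = b}) \<inter> Cp p = Cp p \<inter> {\<omega>. \<forall>s\<in>{t, t'}. Yp s \<omega> = ?ys s}"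
      using Cp_space[of _ p] t by auto
    moreover have "(\<Prod>s\<in>{t, t'}. pmf (emp p s) (?ys s)) = pmf (emp p t) a * pmf (emp p t') b"
      using t by simp
    ultimately show "prob (({\<omega>\<in>space M. Yp t \<omega> = a} \<inter> {\<omega>\<in>space M. Yp t' \<omega> = b}) \<inter> Cp p) = Wp p * pmf (emp p t) a * pmf (emp p t') b"
      using marg[OF p, of "{t, t'}" ?ys] t by (simp add: mult_ac)
  qed
  finally show ?thesis .
qed

lemma E1:
  assumes t: "t \<in> {1..T}" and h: "\<And>x. 0 \<le> h x" and hi: "\<And>p. p \<in> Paths \<Longrightarrow> integrable (emp p t) h"
  shows "(\<integral>\<^sup>+\<omega>. ennreal (h (Yp t \<omega>)) \<partial>M) = ennreal (\<Sum>p\<in>Paths. Wp p * (\<integral>x. h x \<partial>emp p t))"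
proof -
  have "(\<integral>\<^sup>+\<omega>. ennreal (h (Yp t \<omega>)) \<partial>M) = (\<integral>\<^sup>+\<omega>. ennreal (h (Yp t \<omega>)) * indicator (space M) \<omega> \<partial>M)"
    by (rule nn_integral_cong) auto
  also have "\<dots> = (\<Sum>a. ennreal (h a) * emeasure M (space M \<inter> {\<omega>\<in>space M. Yp t \<omega> = a}))"
    by (rule nn_integral_nat_rv[where f = "\<lambda>a. ennreal (h a)"]) auto
  also have "\<dots> = (\<Sum>a. \<Sum>p\<in>Paths. ennreal (Wp p) * (ennreal (pmf (emp p t) a) * ennreal (h a)))"
  proof (rule suminf_cong)
    fix a
    have "space M \<inter> {\<omega>\<in>space M. Yp t \<omega> = a} = {\<omega>\<in>space M. Yp t \<omega> = a}" by auto
    then have "emeasure M (space M \<inter> {\<omega>\<in>space M. Yp t \<omega> = a}) = ennreal (\<Sum>p\<in>Paths. Wp p * pmf (emp p t) a)"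
      by (simp add: emeasure_eq_measure prob_Y1[OF t])
    also have "\<dots> = (\<Sum>p\<in>Paths. ennreal (Wp p) * ennreal (pmf (emp p t) a))"
      by (subst sum_ennreal[symmetric]) (auto simp: Wp_nonneg ennreal_mult)
    finally show "ennreal (h a) * emeasure M (space M \<inter> {\<omega>\<in>space M. Yp t \<omega> = a})
      = (\<Sum>p\<in>Paths. ennreal (Wp p) * (ennreal (pmf (emp p t) a) * ennreal (h a)))"
      by (simp add: sum_distrib_left mult_ac)
  qed
  also have "\<dots> = (\<Sum>p\<in>Paths. ennreal (Wp p) * (\<Sum>a. ennreal (pmf (emp p t) a) * ennreal (h a)))"
    by (simp add: ennsuminf_sum finite_Paths)
  also have "\<dots> = (\<Sum>p\<in>Paths. ennreal (Wp p) * ennreal (\<integral>x. h x \<partial>emp p t))"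
    using hi h by (intro sum.cong refl) (simp add: pmf_nn_int)
  also have "\<dots> = ennreal (\<Sum>p\<in>Paths. Wp p * (\<integral>x. h x \<partial>emp p t))"
    using h by (subst sum_ennreal[symmetric]) (auto simp: Wp_nonneg ennreal_mult)
  finally show ?thesis .
qed

lemma E2:
  assumes t: "t \<in> {1..T}" "t' \<in> {1..T}" "t \<noteq> t'" and h: "\<And>x. 0 \<le> h x" "\<And>x. 0 \<le> g x"
    and hi: "\<And>p. p \<in> Paths \<Longrightarrow> integrable (emp p t) h" "\<And>p. p \<in> Paths \<Longrightarrow> integrable (emp p t') g"
  shows "(\<integral>\<^sup>+\<omega>. ennreal (h (Yp t \<omega>) * g (Yp t' \<omega>)) \<partial>M)
     = ennreal (\<Sum>p\<in>Paths. Wp p * (\<integral>x. h x \<partial>emp p t) * (\<integral>x. g x \<partial>emp p t'))"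
proof -
  let ?A = "\<lambda>a. {\<omega>\<in>space M. Yp t \<omega> = a}"
  have "(\<integral>\<^sup>+\<omega>. ennreal (h (Yp t \<omega>) * g (Yp t' \<omega>)) \<partial>M) = (\<integral>\<^sup>+\<omega>. ennreal (h (Yp t \<omega>)) * (ennreal (g (Yp t' \<omega>)) * indicator (space M) \<omega>) \<partial>M)"
    using h by (intro nn_integral_cong) (auto simp: ennreal_mult)
  also have "\<dots> = (\<integral>\<^sup>+\<omega>. ennreal (h (Yp t \<omega>)) * (ennreal (g (Yp t' \<omega>)) * indicator (space M) \<omega>) * indicator (space M) \<omega> \<partial>M)"
    by (rule nn_integral_cong) auto
  also have "\<dots> = (\<Sum>a. ennreal (h a) * (\<integral>\<^sup>+\<omega>. ennreal (g (Yp t' \<omega>)) * indicator (?A a) \<omega> \<partial>M))"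
  proof -
    have "(\<integral>\<^sup>+\<omega>. ennreal (h (Yp t \<omega>)) * (ennreal (g (Yp t' \<omega>)) * indicator (space M) \<omega>) * indicator (space M) \<omega> \<partial>M)
       = (\<integral>\<^sup>+\<omega>. (\<Sum>a. ennreal (h a) * (ennreal (g (Yp t' \<omega>)) * indicator (?A a) \<omega>)) \<partial>M)"
    proof (rule nn_integral_cong)
      fix \<omega> assume w: "\<omega> \<in> space M"
      have "(\<lambda>a. ennreal (h a) * (ennreal (g (Yp t' \<omega>)) * indicator (?A a) \<omega>))
          = (\<lambda>a. if a = Yp t \<omega> then ennreal (h a) * ennreal (g (Yp t' \<omega>)) else 0)"
        using w by (auto simp: indicator_def)
      then show "ennreal (h (Yp t \<omega>)) * (ennreal (g (Yp t' \<omega>)) * indicator (space M) \<omega>) * indicator (space M) \<omega>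
         = (\<Sum>a. ennreal (h a) * (ennreal (g (Yp t' \<omega>)) * indicator (?A a) \<omega>))"
        using sums_single[of "Yp t \<omega>" "\<lambda>a. ennreal (h a) * ennreal (g (Yp t' \<omega>))"] w by (simp add: sums_iff)
    qed
    also have "\<dots> = (\<Sum>a. \<integral>\<^sup>+\<omega>. ennreal (h a) * (ennreal (g (Yp t' \<omega>)) * indicator (?A a) \<omega>) \<partial>M)"
      by (rule nn_integral_suminf) measurable
    also have "\<dots> = (\<Sum>a. ennreal (h a) * (\<integral>\<^sup>+\<omega>. ennreal (g (Yp t' \<omega>)) * indicator (?A a) \<omega> \<partial>M))"
      by (intro suminf_cong nn_integral_cmult) measurable
    finally show ?thesis .
  qed
  also have "\<dots> = (\<Sum>a. \<Sum>b. \<Sum>p\<in>Paths. ennreal (Wp p) * ((ennreal (pmf (emp p t) a) * ennreal (h a)) * (ennreal (pmf (emp p t') b) * ennreal (g b))))"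
  proof (rule suminf_cong)
    fix a
    have "(\<integral>\<^sup>+\<omega>. ennreal (g (Yp t' \<omega>)) * indicator (?A a) \<omega> \<partial>M) = (\<Sum>b. ennreal (g b) * emeasure M (?A a \<inter> {\<omega>\<in>space M. Yp t' \<omega> = b}))"
      by (rule nn_integral_nat_rv) auto
    also have "\<dots> = (\<Sum>b. ennreal (g b) * (\<Sum>p\<in>Paths. ennreal (Wp p) * (ennreal (pmf (emp p t) a) * ennreal (pmf (emp p t') b))))"
    proof (rule suminf_cong)
      fix b
      have "emeasure M (?A a \<inter> {\<omega>\<in>space M. Yp t' \<omega> = b}) = ennreal (\<Sum>p\<in>Paths. Wp p * pmf (emp p t) a * pmf (emp p t') b)"
        by (simp add: emeasure_eq_measure prob_Y2[OF t])
      also have "\<dots> = (\<Sum>p\<in>Paths. ennreal (Wp p) * (ennreal (pmf (emp p t) a) * ennreal (pmf (emp p t') b)))"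
        by (subst sum_ennreal[symmetric]) (auto simp: Wp_nonneg ennreal_mult mult.assoc)
      finally show "ennreal (g b) * emeasure M (?A a \<inter> {\<omega>\<in>space M. Yp t' \<omega> = b})
         = ennreal (g b) * (\<Sum>p\<in>Paths. ennreal (Wp p) * (ennreal (pmf (emp p t) a) * ennreal (pmf (emp p t') b)))" by simp
    qed
    finally show "ennreal (h a) * (\<integral>\<^sup>+\<omega>. ennreal (g (Yp t' \<omega>)) * indicator (?A a) \<omega> \<partial>M)
      = (\<Sum>b. \<Sum>p\<in>Paths. ennreal (Wp p) * ((ennreal (pmf (emp p t) a) * ennreal (h a)) * (ennreal (pmf (emp p t') b) * ennreal (g b))))"
      by (simp del: ennreal_suminf_cmult add: ennreal_suminf_cmult[symmetric] sum_distrib_left mult_ac)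
  qed
  also have "\<dots> = (\<Sum>p\<in>Paths. ennreal (Wp p) * ((\<Sum>a. ennreal (pmf (emp p t) a) * ennreal (h a)) * (\<Sum>b. ennreal (pmf (emp p t') b) * ennreal (g b))))"
    by (simp only: ennsuminf_sum[OF finite_Paths] ennreal_suminf_prod)
  also have "\<dots> = (\<Sum>p\<in>Paths. ennreal (Wp p) * (ennreal (\<integral>x. h x \<partial>emp p t) * ennreal (\<integral>x. g x \<partial>emp p t')))"
    using hi h by (intro sum.cong refl) (simp add: pmf_nn_int)
  also have "\<dots> = ennreal (\<Sum>p\<in>Paths. Wp p * (\<integral>x. h x \<partial>emp p t) * (\<integral>x. g x \<partial>emp p t'))"
    using h by (subst sum_ennreal[symmetric]) (auto simp: Wp_nonneg ennreal_mult mult_ac)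
  finally show ?thesis .
qed
end


lemma stepf_emis_pt:
  assumes "\<And>z x'. x' \<noteq> 0 \<Longrightarrow> \<phi> z x' = 0"
  shows "stepf r q \<phi> v z = (\<Sum>y\<le>r. v y * Ml r q 0 y) * (Ms q z 0 * \<phi> z 0)"
proof -
  have "stepf r q \<phi> v z = (\<Sum>y\<le>r. v y * (Ml r q 0 y * Ms q z 0 * \<phi> z 0))"
    unfolding stepf_def
  proof (rule sum.cong[OF refl])
    fix y
    have "(\<Sum>x'\<le>r. v y * (Ml r q x' y * Ms q z x' * \<phi> z x')) = (\<Sum>x'\<le>r. if x' = 0 then v y * (Ml r q 0 y * Ms q z 0 * \<phi> z 0) else 0)"
      using assms by (intro sum.cong) auto
    then show "(\<Sum>x'\<le>r. v y * (Ml r q x' y * Ms q z x' * \<phi> z x')) = v y * (Ml r q 0 y * Ms q z 0 * \<phi> z 0)"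
      by simp
  qed
  then show ?thesis by (simp add: sum_distrib_left sum_distrib_right mult_ac)
qed

lemma ev1:
  assumes q_sum: "\<And>z. z \<le> r - 1 \<Longrightarrow> (\<Sum>x\<le>r. q x z) = 1"
    and t: "1 \<le> t" "t \<le> T" and q0: "q 0 0 \<noteq> 0"
    and phi: "\<And>z x'. x' \<noteq> 0 \<Longrightarrow> \<phi> z x' = 0"
  shows "(\<Sum>z\<le>r. chainf r q (\<lambda>s z x'. if s = t then \<phi> z x' else 1) v T z)
       = (\<Sum>z\<le>r. Ms q z 0 * \<phi> z 0) * (chainf r q (\<lambda>_ _ _. 1) v t 0 / q 0 0)"
proof -
  let ?\<Phi> = "\<lambda>s z x'. if s = t then \<phi> z x' else 1"
  obtain k where k: "t = Suc k" using t by (cases t) auto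
  have "(\<Sum>z\<le>r. chainf r q ?\<Phi> v T z) = (\<Sum>z\<le>r. chainf r q ?\<Phi> v t z)"
    by (rule mass_tail[OF q_sum]) (use t in auto)
  also have "chainf r q ?\<Phi> v t = stepf r q \<phi> (chainf r q ?\<Phi> v k)"
    using k by simp
  also have "chainf r q ?\<Phi> v k = chainf r q (\<lambda>_ _ _. 1) v k"
    by (rule chain_cong) (use k in auto)
  also have "(\<Sum>z\<le>r. stepf r q \<phi> (chainf r q (\<lambda>_ _ _. 1) v k) z)
     = (\<Sum>z\<le>r. Ms q z 0 * \<phi> z 0) * (\<Sum>y\<le>r. chainf r q (\<lambda>_ _ _. 1) v k y * Ml r q 0 y)"
    by (rule step_emis) (rule phi)
  also have "(\<Sum>y\<le>r. chainf r q (\<lambda>_ _ _. 1) v k y * Ml r q 0 y) = chainf r q (\<lambda>_ _ _. 1) v t 0 / q 0 0"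
    using k q0 by (simp add: step1_row0)
  finally show ?thesis .
qed

lemma ev2:
  assumes q_sum: "\<And>z. z \<le> r - 1 \<Longrightarrow> (\<Sum>x\<le>r. q x z) = 1"
    and t: "1 \<le> t'" "t' < t" "t \<le> T" and q0: "q 0 0 \<noteq> 0"
    and phi: "\<And>z x'. x' \<noteq> 0 \<Longrightarrow> \<phi> z x' = 0" "\<And>z x'. x' \<noteq> 0 \<Longrightarrow> \<psi> z x' = 0"
  shows "(\<Sum>z\<le>r. chainf r q (\<lambda>s z x'. if s = t then \<phi> z x' else if s = t' then \<psi> z x' else 1) v T z)
       = (\<Sum>z\<le>r. Ms q z 0 * \<phi> z 0) *
         (chainf r q (\<lambda>_ _ _. 1) (\<lambda>z. (chainf r q (\<lambda>_ _ _. 1) v t' 0 / q 0 0) * (Ms q z 0 * \<psi> z 0)) (t - t') 0 / q 0 0)"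
proof -
  let ?\<Phi> = "\<lambda>s z x'. if s = t then \<phi> z x' else if s = t' then \<psi> z x' else 1"
  define w where "w = (\<lambda>z. (chainf r q (\<lambda>_ _ _. 1) v t' 0 / q 0 0) * (Ms q z 0 * \<psi> z 0))"
  obtain k where k: "t' = Suc k" using t by (cases t') auto
  obtain d where d: "t - t' = Suc d" using t by (cases "t - t'") auto
  have tt: "t = t' + Suc d" using d t by auto
  have "(\<Sum>z\<le>r. chainf r q ?\<Phi> v T z) = (\<Sum>z\<le>r. chainf r q ?\<Phi> v t z)"
    by (rule mass_tail[OF q_sum]) (use t in auto)
  also have "chainf r q ?\<Phi> v t = chainf r q (\<lambda>s. ?\<Phi> (s + t')) (chainf r q ?\<Phi> v t') (Suc d)"
    unfolding tt by (rule chain_shift)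
  also have "chainf r q ?\<Phi> v t' = w"
  proof
    fix z
    have "chainf r q ?\<Phi> v t' = stepf r q \<psi> (chainf r q ?\<Phi> v k)"
      using k t by simp
    also have "chainf r q ?\<Phi> v k = chainf r q (\<lambda>_ _ _. 1) v k"
      by (rule chain_cong) (use k t in auto)
    finally have "chainf r q ?\<Phi> v t' z = (\<Sum>y\<le>r. chainf r q (\<lambda>_ _ _. 1) v k y * Ml r q 0 y) * (Ms q z 0 * \<psi> z 0)"
      using stepf_emis_pt[of \<psi>] phi by simp
    also have "(\<Sum>y\<le>r. chainf r q (\<lambda>_ _ _. 1) v k y * Ml r q 0 y) = chainf r q (\<lambda>_ _ _. 1) v t' 0 / q 0 0"
      using k q0 by (simp add: step1_row0)
    finally show "chainf r q ?\<Phi> v t' z = w z" unfolding w_def .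
  qed
  also have "chainf r q (\<lambda>s. ?\<Phi> (s + t')) w (Suc d) = stepf r q \<phi> (chainf r q (\<lambda>s. ?\<Phi> (s + t')) w d)"
    using tt by simp
  also have "chainf r q (\<lambda>s. ?\<Phi> (s + t')) w d = chainf r q (\<lambda>_ _ _. 1) w d"
    by (rule chain_cong) (use tt in auto)
  also have "(\<Sum>z\<le>r. stepf r q \<phi> (chainf r q (\<lambda>_ _ _. 1) w d) z)
     = (\<Sum>z\<le>r. Ms q z 0 * \<phi> z 0) * (\<Sum>y\<le>r. chainf r q (\<lambda>_ _ _. 1) w d y * Ml r q 0 y)"
    by (rule step_emis) (rule phi)
  also have "(\<Sum>y\<le>r. chainf r q (\<lambda>_ _ _. 1) w d y * Ml r q 0 y) = chainf r q (\<lambda>_ _ _. 1) w (t - t') 0 / q 0 0"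
    using d q0 by (simp add: step1_row0)
  finally show ?thesis unfolding w_def .
qed

context fluo
begin

definition m1 :: "nat \<Rightarrow> nat \<Rightarrow> real" where "m1 z x' = pmf_mean (emis p00 p10 z x')"
definition m2 :: "nat \<Rightarrow> nat \<Rightarrow> real" where "m2 z x' = pmf_mom2 (emis p00 p10 z x')"

lemma m1_0: "x' \<noteq> 0 \<Longrightarrow> m1 z x' = 0"
  by (simp add: m1_def emis_def pmf_mean_def)
lemma m2_0: "x' \<noteq> 0 \<Longrightarrow> m2 z x' = 0"
  by (simp add: m2_def emis_def pmf_mom2_def)

lemma emis_int1: "integrable (measure_pmf (emis p00 p10 z x')) real"
  using mom1 by (simp add: emis_def integrable_measure_pmf_finite)
lemma emis_int2: "integrable (measure_pmf (emis p00 p10 z x')) (\<lambda>n. (real n)\<^sup>2)"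
  using mom2 by (simp add: emis_def integrable_measure_pmf_finite)

definition one1 :: "nat \<Rightarrow> nat \<Rightarrow> real" where "one1 = (\<lambda>_ _. 1)"

lemma EY_gen:
  assumes t: "t \<in> {1..T}" and h: "\<And>x. 0 \<le> h x"
    and hi: "\<And>z x'. integrable (measure_pmf (emis p00 p10 z x')) h"
  shows "integrable M (\<lambda>\<omega>. h (Yp t \<omega>)) \<and> expectation (\<lambda>\<omega>. h (Yp t \<omega>))
    = (\<Sum>z\<le>r. chainf r q (\<lambda>s z x'. if s = t then (\<integral>n. h n \<partial>emis p00 p10 z x') else 1) \<nu> T z)"
proof -
  let ?S = "\<Sum>p\<in>Paths. Wp p * (\<integral>x. h x \<partial>emp p t)"
  have S0: "0 \<le> ?S" using h by (intro sum_nonneg mult_nonneg_nonneg Wp_nonneg integral_nonneg) auto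
  have "(\<integral>\<^sup>+\<omega>. ennreal (h (Yp t \<omega>)) \<partial>M) = ennreal ?S"
    by (rule E1[OF t h]) (simp add: emp_def hi)
  then have I: "integrable M (\<lambda>\<omega>. h (Yp t \<omega>)) \<and> expectation (\<lambda>\<omega>. h (Yp t \<omega>)) = ?S"
    using nn_integral_eq_integrable[of "\<lambda>\<omega>. h (Yp t \<omega>)" M ?S] S0 h by simp
  also have "?S = (\<Sum>p\<in>Paths. Wp p * (\<Prod>s\<in>{1..T}. (\<lambda>s z x'. if s = t then (\<integral>n. h n \<partial>emis p00 p10 z x') else 1) s (fst p s) (snd p s)))"
    using t by (intro sum.cong refl) (simp add: emp_def prod.delta)
  also have "\<dots> = (\<Sum>z\<le>r. chainf r q (\<lambda>s z x'. if s = t then (\<integral>n. h n \<partial>emis p00 p10 z x') else 1) \<nu> T z)"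
    by (rule Wp_prod_sum)
  finally show ?thesis .
qed

lemma EYY_gen:
  assumes t: "t \<in> {1..T}" "t' \<in> {1..T}" "t \<noteq> t'" and h: "\<And>x. 0 \<le> h x" "\<And>x. 0 \<le> g x"
    and hi: "\<And>z x'. integrable (measure_pmf (emis p00 p10 z x')) h" "\<And>z x'. integrable (measure_pmf (emis p00 p10 z x')) g"
  shows "integrable M (\<lambda>\<omega>. h (Yp t \<omega>) * g (Yp t' \<omega>)) \<and> expectation (\<lambda>\<omega>. h (Yp t \<omega>) * g (Yp t' \<omega>))
    = (\<Sum>z\<le>r. chainf r q (\<lambda>s z x'. if s = t then (\<integral>n. h n \<partial>emis p00 p10 z x')
         else if s = t' then (\<integral>n. g n \<partial>emis p00 p10 z x') else 1) \<nu> T z)"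
proof -
  let ?S = "\<Sum>p\<in>Paths. Wp p * (\<integral>x. h x \<partial>emp p t) * (\<integral>x. g x \<partial>emp p t')"
  have S0: "0 \<le> ?S" using h by (intro sum_nonneg mult_nonneg_nonneg Wp_nonneg integral_nonneg) auto
  have "(\<integral>\<^sup>+\<omega>. ennreal (h (Yp t \<omega>) * g (Yp t' \<omega>)) \<partial>M) = ennreal ?S"
    by (rule E2[OF t h]) (simp_all add: emp_def hi)
  then have I: "integrable M (\<lambda>\<omega>. h (Yp t \<omega>) * g (Yp t' \<omega>)) \<and> expectation (\<lambda>\<omega>. h (Yp t \<omega>) * g (Yp t' \<omega>)) = ?S"
    using nn_integral_eq_integrable[of "\<lambda>\<omega>. h (Yp t \<omega>) * g (Yp t' \<omega>)" M ?S] S0 h by simp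
  also have "?S = (\<Sum>p\<in>Paths. Wp p * (\<Prod>s\<in>{1..T}. (\<lambda>s z x'. if s = t then (\<integral>n. h n \<partial>emis p00 p10 z x')
         else if s = t' then (\<integral>n. g n \<partial>emis p00 p10 z x') else 1) s (fst p s) (snd p s)))"
  proof (intro sum.cong refl)
    fix p
    have "(\<Prod>s\<in>{1..T}. (\<lambda>s z x'. if s = t then (\<integral>n. h n \<partial>emis p00 p10 z x')
         else if s = t' then (\<integral>n. g n \<partial>emis p00 p10 z x') else 1) s (fst p s) (snd p s))
      = (\<Prod>s\<in>{1..T}. (if s = t then (\<integral>n. h n \<partial>emp p t) else 1) * (if s = t' then (\<integral>n. g n \<partial>emp p t') else 1))"
      using t by (intro prod.cong refl) (auto simp: emp_def)
    also have "\<dots> = (\<integral>n. h n \<partial>emp p t) * (\<integral>n. g n \<partial>emp p t')"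
      using t by (simp add: prod.distrib prod.delta)
    finally show "Wp p * (\<integral>x. h x \<partial>emp p t) * (\<integral>x. g x \<partial>emp p t') = Wp p * (\<Prod>s\<in>{1..T}. (\<lambda>s z x'. if s = t then (\<integral>n. h n \<partial>emis p00 p10 z x')
         else if s = t' then (\<integral>n. g n \<partial>emis p00 p10 z x') else 1) s (fst p s) (snd p s))" by simp
  qed
  also have "\<dots> = (\<Sum>z\<le>r. chainf r q (\<lambda>s z x'. if s = t then (\<integral>n. h n \<partial>emis p00 p10 z x')
         else if s = t' then (\<integral>n. g n \<partial>emis p00 p10 z x') else 1) \<nu> T z)"
    by (rule Wp_prod_sum)
  finally show ?thesis .
qed

definition Pt :: "nat \<Rightarrow> real" where "Pt t = chainf r q (\<lambda>_ _ _. 1) \<nu> t 0 / q 0 0"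

lemma mom_Y1:
  assumes t: "t \<in> {1..T}" and q0: "q 0 0 \<noteq> 0"
  shows "integrable M (\<lambda>\<omega>. real (Yp t \<omega>)) \<and> expectation (\<lambda>\<omega>. real (Yp t \<omega>)) = (\<Sum>z\<le>r. Ms q z 0 * m1 z 0) * Pt t"
proof -
  have e: "(\<lambda>s z x'. if s = t then \<integral>n. real n \<partial>emis p00 p10 z x' else 1) = (\<lambda>s z x'. if s = t then m1 z x' else 1)"
    unfolding m1_def pmf_mean_def by (rule refl)
  have "(\<Sum>z\<le>r. chainf r q (\<lambda>s z x'. if s = t then m1 z x' else 1) \<nu> T z) = (\<Sum>z\<le>r. Ms q z 0 * m1 z 0) * Pt t"
    unfolding Pt_def by (rule ev1[where r=r and q=q, OF q_sum _ _ q0]) (use t m1_0 in auto)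
  then show ?thesis using EY_gen[OF t, of real] emis_int1 unfolding e by simp
qed

lemma mom_Y2:
  assumes t: "t \<in> {1..T}" and q0: "q 0 0 \<noteq> 0"
  shows "integrable M (\<lambda>\<omega>. (real (Yp t \<omega>))\<^sup>2) \<and> expectation (\<lambda>\<omega>. (real (Yp t \<omega>))\<^sup>2) = (\<Sum>z\<le>r. Ms q z 0 * m2 z 0) * Pt t"
proof -
  have e: "(\<lambda>s z x'. if s = t then \<integral>n. (real n)\<^sup>2 \<partial>emis p00 p10 z x' else 1) = (\<lambda>s z x'. if s = t then m2 z x' else 1)"
    unfolding m2_def pmf_mom2_def by (rule refl)
  have "(\<Sum>z\<le>r. chainf r q (\<lambda>s z x'. if s = t then m2 z x' else 1) \<nu> T z) = (\<Sum>z\<le>r. Ms q z 0 * m2 z 0) * Pt t"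
    unfolding Pt_def by (rule ev1[where r=r and q=q, OF q_sum _ _ q0]) (use t m2_0 in auto)
  then show ?thesis using EY_gen[OF t, of "\<lambda>n. (real n)\<^sup>2"] emis_int2 unfolding e by simp
qed

lemma mom_YY:
  assumes t: "1 \<le> t'" "t' < t" "t \<le> T" and q0: "q 0 0 \<noteq> 0"
  shows "integrable M (\<lambda>\<omega>. real (Yp t \<omega>) * real (Yp t' \<omega>)) \<and> expectation (\<lambda>\<omega>. real (Yp t \<omega>) * real (Yp t' \<omega>))
    = (\<Sum>z\<le>r. Ms q z 0 * m1 z 0) * (chainf r q (\<lambda>_ _ _. 1) (\<lambda>z. Pt t' * (Ms q z 0 * m1 z 0)) (t - t') 0 / q 0 0)"
proof -
  have e: "(\<lambda>s z x'. if s = t then \<integral>n. real n \<partial>emis p00 p10 z x' else if s = t' then \<integral>n. real n \<partial>emis p00 p10 z x' else 1)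
     = (\<lambda>s z x'. if s = t then m1 z x' else if s = t' then m1 z x' else 1)"
    unfolding m1_def pmf_mean_def by (rule refl)
  have "(\<Sum>z\<le>r. chainf r q (\<lambda>s z x'. if s = t then m1 z x' else if s = t' then m1 z x' else 1) \<nu> T z)
     = (\<Sum>z\<le>r. Ms q z 0 * m1 z 0) * (chainf r q (\<lambda>_ _ _. 1) (\<lambda>z. Pt t' * (Ms q z 0 * m1 z 0)) (t - t') 0 / q 0 0)"
    unfolding Pt_def by (rule ev2[where r=r and q=q, OF q_sum t q0]) (use m1_0 in auto)
  moreover have "t \<in> {1..T}" "t' \<in> {1..T}" "t \<noteq> t'" using t by auto
  ultimately show ?thesis using EYY_gen[of t t' real real] emis_int1 unfolding e by simp
qed

end


lemma sum_atMost_split: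
  fixes f :: "nat \<Rightarrow> 'b::comm_monoid_add"
  shows "(\<Sum>x\<le>r. f x) = (\<Sum>x<r. f x) + f r"
  using sum.lessThan_Suc[of f r] by (simp add: lessThan_Suc_atMost)

locale diagL =
  fixes r :: nat and q :: "nat \<Rightarrow> nat \<Rightarrow> real" and V Vinv :: "nat \<Rightarrow> nat \<Rightarrow> complex" and lam :: "nat \<Rightarrow> complex"
  assumes r1: "1 \<le> r" and q0: "q 0 0 \<noteq> 0"
    and V_inv1: "\<And>i j. i \<le> r \<Longrightarrow> j \<le> r \<Longrightarrow> (\<Sum>k\<le>r. V i k * Vinv k j) = (if i = j then 1 else 0)"
    and V_inv2: "\<And>i j. i \<le> r \<Longrightarrow> j \<le> r \<Longrightarrow> (\<Sum>k\<le>r. Vinv i k * V k j) = (if i = j then 1 else 0)"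
    and diag: "\<And>x z. x \<le> r \<Longrightarrow> z \<le> r \<Longrightarrow>
                 complex_of_real (Mmat r q x z) = (\<Sum>y\<le>r. V x y * lam y * Vinv y z)"
    and V_col_r: "\<And>x. x \<le> r \<Longrightarrow> V x r = (if x = r then 1 else 0)"
begin

lemma V0r: "V 0 r = 0" using V_col_r[of 0] r1 by simp

lemma chain0: "complex_of_real (chainf r q (\<lambda>_ _ _. 1) v n 0)
     = (\<Sum>x<r. V 0 x * lam x ^ n * (\<Sum>w\<le>r. Vinv x w * complex_of_real (v w)))"
  using chain_diag[of r V Vinv q lam 0 v n, OF V_inv1 V_inv2 diag] by (simp add: sum_atMost_split V0r)

lemma D1:
  assumes "1 \<le> t"
  shows "complex_of_real (chainf r q (\<lambda>_ _ _. 1) \<nu> t 0 / q 0 0) = (\<Sum>x<r. alpha r V Vinv lam q \<nu> x * lam x ^ (t - 1))"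
proof -
  obtain k where k: "t = Suc k" using assms by (cases t) auto
  show ?thesis
    unfolding of_real_divide chain0 alpha_def k sum_divide_distrib
    by (intro sum.cong refl) (simp add: field_simps)
qed

definition G :: "nat \<Rightarrow> complex" where
  "G k = (\<Sum>x<r. alpha0 V Vinv lam q x * lam x ^ (k - 1))"

lemma G_eq: "1 \<le> k \<Longrightarrow> (\<Sum>x<r. V 0 x * lam x ^ k * Vinv x 0) = of_real (q 0 0) * G k"
proof -
  assume "1 \<le> k"
  then obtain j where k: "k = Suc j" by (cases k) auto
  show ?thesis unfolding G_def alpha0_def k sum_distrib_left
    using q0 by (intro sum.cong refl) (simp add: field_simps)
qed

lemma Vinv_q: "x \<le> r \<Longrightarrow> (\<Sum>z\<le>r. Vinv x z * complex_of_real (q z 0)) = lam x * Vinv x 0"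
proof -
  assume x: "x \<le> r"
  have "(\<Sum>z\<le>r. Vinv x z * complex_of_real (q z 0)) = (\<Sum>z\<le>r. Vinv x z * (\<Sum>a\<le>r. V z a * lam a * Vinv a 0))"
  proof (intro sum.cong refl)
    fix z assume "z \<in> {..r}"
    then have "complex_of_real (q z 0) = complex_of_real (Mmat r q z 0)" by (simp add: Mmat_col0 Ms_def)
    also have "\<dots> = (\<Sum>a\<le>r. V z a * lam a * Vinv a 0)" using \<open>z \<in> {..r}\<close> by (simp add: diag)
    finally show "Vinv x z * complex_of_real (q z 0) = Vinv x z * (\<Sum>a\<le>r. V z a * lam a * Vinv a 0)" by simp
  qed
  also have "\<dots> = (\<Sum>a\<le>r. (\<Sum>z\<le>r. Vinv x z * V z a) * (lam a * Vinv a 0))"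
    by (simp add: sum_distrib_left sum_distrib_right mult_ac) (rule sum.swap)
  also have "\<dots> = (\<Sum>a\<le>r. if x = a then lam a * Vinv a 0 else 0)"
    using x by (intro sum.cong refl) (simp add: V_inv2)
  also have "\<dots> = lam x * Vinv x 0" using x by simp
  finally show ?thesis .
qed

lemma D2:
  assumes "1 \<le> d"
  shows "complex_of_real (chainf r q (\<lambda>_ _ _. 1) (\<lambda>z. c * (Ms q z 0 * (if z = 0 then a else b))) d 0)
    = of_real c * of_real (q 0 0) * (of_real b * G (d + 1) + of_real (a - b) * of_real (q 0 0) * G d)"
proof -
  have inner: "(\<Sum>w\<le>r. Vinv x w * complex_of_real (c * (Ms q w 0 * (if w = 0 then a else b))))
     = of_real c * (of_real b * (lam x * Vinv x 0) + of_real (a - b) * of_real (q 0 0) * Vinv x 0)" if x: "x \<le> r" for x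
  proof -
    have "(\<Sum>w\<le>r. Vinv x w * complex_of_real (c * (Ms q w 0 * (if w = 0 then a else b))))
       = (\<Sum>w\<le>r. of_real c * (of_real b * (Vinv x w * complex_of_real (q w 0))) + (if w = 0 then of_real c * (of_real (a - b) * of_real (q 0 0) * Vinv x 0) else 0))"
      by (intro sum.cong refl) (auto simp: Ms_def algebra_simps)
    also have "\<dots> = of_real c * (of_real b * (\<Sum>w\<le>r. Vinv x w * complex_of_real (q w 0)) + of_real (a - b) * of_real (q 0 0) * Vinv x 0)"
      by (simp add: sum.distrib sum_distrib_left distrib_left)
    finally show ?thesis using Vinv_q[OF x] by simp
  qed
  have "complex_of_real (chainf r q (\<lambda>_ _ _. 1) (\<lambda>z. c * (Ms q z 0 * (if z = 0 then a else b))) d 0)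
     = (\<Sum>x<r. V 0 x * lam x ^ d * (of_real c * (of_real b * (lam x * Vinv x 0) + of_real (a - b) * of_real (q 0 0) * Vinv x 0)))"
    unfolding chain0
  proof (rule sum.cong[OF refl])
    fix x assume x: "x \<in> {..<r}"
    show "V 0 x * lam x ^ d * (\<Sum>w\<le>r. Vinv x w * complex_of_real (c * (Ms q w 0 * (if w = 0 then a else b))))
      = V 0 x * lam x ^ d * (of_real c * (of_real b * (lam x * Vinv x 0) + of_real (a - b) * of_real (q 0 0) * Vinv x 0))"
      by (subst inner) (use x in auto)
  qed
  also have "\<dots> = of_real c * (of_real b * (\<Sum>x<r. V 0 x * lam x ^ (d + 1) * Vinv x 0) + of_real (a - b) * of_real (q 0 0) * (\<Sum>x<r. V 0 x * lam x ^ d * Vinv x 0))"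
    by (simp add: sum_distrib_left sum.distrib sum_subtractf algebra_simps)
  also have "\<dots> = of_real c * of_real (q 0 0) * (of_real b * G (d + 1) + of_real (a - b) * of_real (q 0 0) * G d)"
  proof -
    have g1: "(\<Sum>x<r. V 0 x * lam x ^ (d + 1) * Vinv x 0) = of_real (q 0 0) * G (d + 1)" by (rule G_eq) simp
    have g2: "(\<Sum>x<r. V 0 x * lam x ^ d * Vinv x 0) = of_real (q 0 0) * G d" by (rule G_eq) (rule assms)
    show ?thesis unfolding g1 g2 by (simp add: algebra_simps)
  qed
  finally show ?thesis .
qed

end


lemma mgf_moments:
  assumes "mgf_finite_near0 p"
  shows "integrable (measure_pmf p) real" "integrable (measure_pmf p) (\<lambda>n. (real n)\<^sup>2)"
proof -
  obtain \<delta> where d: "\<delta> > 0" "\<And>s. \<bar>s\<bar> < \<delta> \<Longrightarrow> summable (\<lambda>n. pmf p n * exp (s * real n))"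
    using assms unfolding mgf_finite_near0_def by blast
  define s where "s = \<delta> / 2"
  have s: "0 < s" "summable (\<lambda>n. pmf p n * exp (s * real n))"
    unfolding s_def using d(1) apply simp
    by (rule d(2)) (use d(1) in simp)
  have "(\<integral>\<^sup>+x. ennreal (exp (s * real x)) \<partial>measure_pmf p) = (\<Sum>n. ennreal (pmf p n) * ennreal (exp (s * real n)))"
    by (rule pmf_nn)
  also have "\<dots> = (\<Sum>n. ennreal (pmf p n * exp (s * real n)))"
    by (simp add: ennreal_mult)
  also have "\<dots> = ennreal (\<Sum>n. pmf p n * exp (s * real n))"
    by (rule suminf_ennreal2) (use s in auto)
  finally have fin: "(\<integral>\<^sup>+x. ennreal (exp (s * real x)) \<partial>measure_pmf p) < \<infinity>" by simp
  have ie: "integrable (measure_pmf p) (\<lambda>n. exp (s * real n))"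
    by (rule integrableI_bounded) (use fin in simp_all)
  have b1: "real n \<le> exp (s * real n) / s" for n
  proof -
    have "s * real n \<le> exp (s * real n)" using exp_ge_add_one_self[of "s * real n"] by linarith
    then show ?thesis using s by (simp add: field_simps)
  qed
  have b2: "(real n)\<^sup>2 \<le> 4 / s\<^sup>2 * exp (s * real n)" for n
  proof -
    have "s * real n / 2 \<le> exp (s * real n / 2)" using exp_ge_add_one_self[of "s * real n / 2"] by linarith
    then have "(s * real n / 2)\<^sup>2 \<le> (exp (s * real n / 2))\<^sup>2"
      using s by (intro power_mono) auto
    also have "(exp (s * real n / 2))\<^sup>2 = exp (s * real n)"
      by (simp add: power2_eq_square exp_add[symmetric])
    finally show ?thesis using s by (simp add: field_simps power2_eq_square)
  qed
  show "integrable (measure_pmf p) real"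
    by (rule Bochner_Integration.integrable_bound[OF integrable_mult_right[OF ie, of "1/s"]]) (use b1 s in \<open>auto simp: field_simps\<close>)
  show "integrable (measure_pmf p) (\<lambda>n. (real n)\<^sup>2)"
    by (rule Bochner_Integration.integrable_bound[OF integrable_mult_right[OF ie, of "4/s\<^sup>2"]]) (use b2 s in \<open>auto simp: field_simps\<close>)
qed

context prob_space
begin

lemma indep_vars_of_sets:
  fixes Z :: "'j \<Rightarrow> 'a \<Rightarrow> 'b::topological_space"
  assumes ind: "indep_sets F I" and J: "J \<subseteq> I"
    and meas: "\<And>x. x \<in> J \<Longrightarrow> Z x \<in> borel_measurable M"
    and sub: "\<And>x. x \<in> J \<Longrightarrow> {Z x -` A \<inter> space M | A. A \<in> sets borel} \<subseteq> F x"
  shows "indep_vars (\<lambda>_. borel) Z J"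
  unfolding indep_vars_def2
  apply (intro conjI ballI)
  subgoal using meas by auto
  apply (rule indep_sets_mono_sets[OF indep_sets_mono_index[OF J ind]])
  using sub by auto

lemma preimage_sigma:
  assumes "f \<in> measurable (sigma (space M) G) N" "G \<subseteq> Pow (space M)"
  shows "{f -` A \<inter> space M | A. A \<in> sets N} \<subseteq> sigma_sets (space M) G"
proof safe
  fix A assume "A \<in> sets N"
  then have "f -` A \<inter> space (sigma (space M) G) \<in> sets (sigma (space M) G)"
    using assms(1) by (rule measurable_sets[rotated])
  then show "f -` A \<inter> space M \<in> sigma_sets (space M) G"
    using assms(2) by (simp add: sets_measure_of space_measure_of_conv)
qed

lemma indep_pair:
  fixes X Y :: "'a \<Rightarrow> real"
  assumes ind: "indep_sets F I" and ij: "i \<in> I" "j \<in> I" "i \<noteq> j"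
    and meas: "X \<in> borel_measurable M" "Y \<in> borel_measurable M"
    and sub: "{X -` A \<inter> space M | A. A \<in> sets borel} \<subseteq> F i" "{Y -` A \<inter> space M | A. A \<in> sets borel} \<subseteq> F j"
    and int: "integrable M X" "integrable M Y"
  shows "integrable M (\<lambda>\<omega>. X \<omega> * Y \<omega>) \<and> expectation (\<lambda>\<omega>. X \<omega> * Y \<omega>) = expectation X * expectation Y"
proof -
  define Z where "Z = (\<lambda>x. if x = i then X else Y)"
  have iv: "indep_vars (\<lambda>_. borel) Z {i, j}"
    by (rule indep_vars_of_sets[OF ind]) (use ij meas sub in \<open>auto simp: Z_def\<close>)
  have zi: "\<And>x. x \<in> {i, j} \<Longrightarrow> integrable M (Z x)" using int by (auto simp: Z_def)
  have p: "(\<lambda>\<omega>. \<Prod>x\<in>{i, j}. Z x \<omega>) = (\<lambda>\<omega>. X \<omega> * Y \<omega>)" using ij by (auto simp: Z_def)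
  show ?thesis
    using indep_vars_lebesgue_integral[OF _ iv zi] indep_vars_integrable[OF _ iv zi] ij
    by (simp add: p Z_def)
qed

lemma nn_integral_nat_rv2:
  fixes F :: "nat \<Rightarrow> 'a \<Rightarrow> ennreal"
  assumes Y: "Y \<in> measurable M (count_space UNIV)" and F: "\<And>n. F n \<in> borel_measurable M"
  shows "(\<integral>\<^sup>+\<omega>. F (Y \<omega>) \<omega> \<partial>M) = (\<Sum>n. \<integral>\<^sup>+\<omega>. F n \<omega> * indicator {\<omega>\<in>space M. Y \<omega> = n} \<omega> \<partial>M)"
proof -
  have mY: "{\<omega>\<in>space M. Y \<omega> = a} \<in> sets M" for a
    using Y by measurable
  have "(\<integral>\<^sup>+\<omega>. F (Y \<omega>) \<omega> \<partial>M) = (\<integral>\<^sup>+\<omega>. (\<Sum>n. F n \<omega> * indicator {\<omega>\<in>space M. Y \<omega> = n} \<omega>) \<partial>M)"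
  proof (rule nn_integral_cong)
    fix \<omega> assume w: "\<omega> \<in> space M"
    have "(\<lambda>n. F n \<omega> * indicator {\<omega>\<in>space M. Y \<omega> = n} \<omega>) = (\<lambda>n. if n = Y \<omega> then F n \<omega> else 0)"
      using w by (auto simp: indicator_def)
    then show "F (Y \<omega>) \<omega> = (\<Sum>n. F n \<omega> * indicator {\<omega>\<in>space M. Y \<omega> = n} \<omega>)"
      using sums_single[of "Y \<omega>" "\<lambda>n. F n \<omega>"] by (simp add: sums_iff)
  qed
  also have "\<dots> = (\<Sum>n. \<integral>\<^sup>+\<omega>. F n \<omega> * indicator {\<omega>\<in>space M. Y \<omega> = n} \<omega> \<partial>M)"
    by (rule nn_integral_suminf) (use F mY in auto)
  finally show ?thesis .
qed


lemma indicator_block_meas: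
  assumes N0: "N \<in> measurable (sigma (space M) G) (count_space UNIV)" and Gs: "G \<subseteq> Pow (space M)"
  shows "(\<lambda>\<omega>. indicator {\<omega>\<in>space M. N \<omega> = n} \<omega> :: ennreal) \<in> measurable (sigma (space M) G) borel"
proof -
  have "{\<omega>\<in>space M. N \<omega> = n} = N -` {n} \<inter> space (sigma (space M) G)"
    using Gs by (auto simp: space_measure_of_conv)
  also have "\<dots> \<in> sets (sigma (space M) G)" using N0 by (rule measurable_sets) simp
  finally show ?thesis by simp
qed

lemma cond2:
  fixes F :: "nat \<Rightarrow> 'a \<Rightarrow> ennreal" and G :: "nat \<Rightarrow> 'a set set"
  assumes ind: "indep_sets (\<lambda>j. sigma_sets (space M) (G j)) {0, 1}"
    and Gs: "G 0 \<subseteq> Pow (space M)" "G 1 \<subseteq> Pow (space M)"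
    and N0: "N \<in> measurable (sigma (space M) (G 0)) (count_space UNIV)" and N: "N \<in> measurable M (count_space UNIV)"
    and F1: "\<And>n. F n \<in> measurable (sigma (space M) (G 1)) borel" and F: "\<And>n. F n \<in> borel_measurable M"
  shows "(\<integral>\<^sup>+\<omega>. F (N \<omega>) \<omega> \<partial>M) = (\<Sum>n. emeasure M {\<omega>\<in>space M. N \<omega> = n} * (\<integral>\<^sup>+\<omega>. F n \<omega> \<partial>M))"
proof -
  have "(\<integral>\<^sup>+\<omega>. F (N \<omega>) \<omega> \<partial>M) = (\<Sum>n. \<integral>\<^sup>+\<omega>. F n \<omega> * indicator {\<omega>\<in>space M. N \<omega> = n} \<omega> \<partial>M)"
    by (rule nn_integral_nat_rv2[OF N F])
  also have "\<dots> = (\<Sum>n. emeasure M {\<omega>\<in>space M. N \<omega> = n} * (\<integral>\<^sup>+\<omega>. F n \<omega> \<partial>M))"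
  proof (rule suminf_cong)
    fix n
    define Z where "Z = (\<lambda>j::nat. if j = 0 then (\<lambda>\<omega>. indicator {\<omega>\<in>space M. N \<omega> = n} \<omega> :: ennreal) else F n)"
    have mN: "{\<omega>\<in>space M. N \<omega> = n} \<in> sets M" using N by measurable
    have iv: "indep_vars (\<lambda>_. borel) Z {0, 1}"
    proof (rule indep_vars_of_sets[OF ind order.refl])
      fix x :: nat assume x: "x \<in> {0, 1}"
      show "Z x \<in> borel_measurable M" using x mN F by (auto simp: Z_def)
      show "{Z x -` A \<inter> space M |A. A \<in> sets borel} \<subseteq> sigma_sets (space M) (G x)"
      proof (cases "x = 0")
        case True
        then show ?thesis using preimage_sigma[OF indicator_block_meas[OF N0 Gs(1)] Gs(1)] by (simp add: Z_def)
      next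
        case False
        then have "x = 1" using x by auto
        then show ?thesis using preimage_sigma[OF F1 Gs(2)] by (simp add: Z_def)
      qed
    qed
    have "(\<integral>\<^sup>+\<omega>. (\<Prod>j\<in>{0,1}. Z j \<omega>) \<partial>M) = (\<Prod>j\<in>{0,1}. \<integral>\<^sup>+\<omega>. Z j \<omega> \<partial>M)"
      by (rule indep_vars_nn_integral[OF _ iv]) auto
    then show "(\<integral>\<^sup>+\<omega>. F n \<omega> * indicator {\<omega>\<in>space M. N \<omega> = n} \<omega> \<partial>M) = emeasure M {\<omega>\<in>space M. N \<omega> = n} * (\<integral>\<^sup>+\<omega>. F n \<omega> \<partial>M)"
      using mN by (simp add: Z_def mult.commute)
  qed
  finally show ?thesis .
qed

lemma cond3:
  fixes F1 F2 :: "nat \<Rightarrow> 'a \<Rightarrow> ennreal" and G :: "nat \<Rightarrow> 'a set set"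
  assumes ind: "indep_sets (\<lambda>j. sigma_sets (space M) (G j)) {0, 1, 2}"
    and Gs: "G 0 \<subseteq> Pow (space M)" "G 1 \<subseteq> Pow (space M)" "G 2 \<subseteq> Pow (space M)"
    and N0: "N \<in> measurable (sigma (space M) (G 0)) (count_space UNIV)" and N: "N \<in> measurable M (count_space UNIV)"
    and F1: "\<And>n. F1 n \<in> measurable (sigma (space M) (G 1)) borel" "\<And>n. F1 n \<in> borel_measurable M"
    and F2: "\<And>n. F2 n \<in> measurable (sigma (space M) (G 2)) borel" "\<And>n. F2 n \<in> borel_measurable M"
  shows "(\<integral>\<^sup>+\<omega>. F1 (N \<omega>) \<omega> * F2 (N \<omega>) \<omega> \<partial>M)
     = (\<Sum>n. emeasure M {\<omega>\<in>space M. N \<omega> = n} * ((\<integral>\<^sup>+\<omega>. F1 n \<omega> \<partial>M) * (\<integral>\<^sup>+\<omega>. F2 n \<omega> \<partial>M)))"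
proof -
  have mF: "(\<lambda>\<omega>. F1 n \<omega> * F2 n \<omega>) \<in> borel_measurable M" for n using F1 F2 by measurable
  have "(\<integral>\<^sup>+\<omega>. F1 (N \<omega>) \<omega> * F2 (N \<omega>) \<omega> \<partial>M) = (\<Sum>n. \<integral>\<^sup>+\<omega>. F1 n \<omega> * F2 n \<omega> * indicator {\<omega>\<in>space M. N \<omega> = n} \<omega> \<partial>M)"
    using nn_integral_nat_rv2[OF N, where F = "\<lambda>n \<omega>. F1 n \<omega> * F2 n \<omega>", OF mF] by simp
  also have "\<dots> = (\<Sum>n. emeasure M {\<omega>\<in>space M. N \<omega> = n} * ((\<integral>\<^sup>+\<omega>. F1 n \<omega> \<partial>M) * (\<integral>\<^sup>+\<omega>. F2 n \<omega> \<partial>M)))"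
  proof (rule suminf_cong)
    fix n
    define Z where "Z = (\<lambda>j::nat. if j = 0 then (\<lambda>\<omega>. indicator {\<omega>\<in>space M. N \<omega> = n} \<omega> :: ennreal) else if j = 1 then F1 n else F2 n)"
    have mN: "{\<omega>\<in>space M. N \<omega> = n} \<in> sets M" using N by measurable
    have iv: "indep_vars (\<lambda>_. borel) Z {0, 1, 2}"
    proof (rule indep_vars_of_sets[OF ind order.refl])
      fix x :: nat assume x: "x \<in> {0, 1, 2}"
      show "Z x \<in> borel_measurable M" using x mN F1 F2 by (auto simp: Z_def)
      show "{Z x -` A \<inter> space M |A. A \<in> sets borel} \<subseteq> sigma_sets (space M) (G x)"
      proof -
        consider "x = 0" | "x = 1" | "x = 2" using x by auto
        then show ?thesis
        proof cases
          case 1 then show ?thesis using preimage_sigma[OF indicator_block_meas[OF N0 Gs(1)] Gs(1)] by (simp add: Z_def)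
        next
          case 2 then show ?thesis using preimage_sigma[OF F1(1) Gs(2)] by (simp add: Z_def)
        next
          case 3 then show ?thesis using preimage_sigma[OF F2(1) Gs(3)] by (simp add: Z_def)
        qed
      qed
    qed
    have "(\<integral>\<^sup>+\<omega>. (\<Prod>j\<in>{0,1,2}. Z j \<omega>) \<partial>M) = (\<Prod>j\<in>{0,1,2}. \<integral>\<^sup>+\<omega>. Z j \<omega> \<partial>M)"
      by (rule indep_vars_nn_integral[OF _ iv]) auto
    then show "(\<integral>\<^sup>+\<omega>. F1 n \<omega> * F2 n \<omega> * indicator {\<omega>\<in>space M. N \<omega> = n} \<omega> \<partial>M)
        = emeasure M {\<omega>\<in>space M. N \<omega> = n} * ((\<integral>\<^sup>+\<omega>. F1 n \<omega> \<partial>M) * (\<integral>\<^sup>+\<omega>. F2 n \<omega> \<partial>M))"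
      using mN by (simp add: Z_def mult_ac)
  qed
  finally show ?thesis .
qed
end


locale full = prob_space M for M :: "'a measure" +
  fixes r T m :: nat
    and q :: "nat \<Rightarrow> nat \<Rightarrow> real"
    and \<nu> :: "nat \<Rightarrow> real"
    and p00 p10 :: "nat pmf"
    and V Vinv :: "nat \<Rightarrow> nat \<Rightarrow> complex"
    and lam :: "nat \<Rightarrow> complex"
    and X Xp Yp :: "nat \<Rightarrow> nat \<Rightarrow> 'a \<Rightarrow> nat"
    and U :: "nat \<Rightarrow> nat \<Rightarrow> 'a \<Rightarrow> real"
    and eps :: "nat \<Rightarrow> 'a \<Rightarrow> real"
    and \<sigma> :: "nat \<Rightarrow> real"
    and u c ofs :: real
  assumes r1: "1 \<le> r" and T1: "1 \<le> T" and m1: "1 \<le> m"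
    and q_range: "\<And>x z. x \<le> r \<Longrightarrow> z \<le> r - 1 \<Longrightarrow> 0 \<le> q x z \<and> q x z \<le> 1"
    and q_sum: "\<And>z. z \<le> r - 1 \<Longrightarrow> (\<Sum>x\<le>r. q x z) = 1"
    and nu_nonneg: "\<And>z. z \<le> r \<Longrightarrow> 0 \<le> \<nu> z"
    and nu_sum: "(\<Sum>z\<le>r. \<nu> z) = 1"
    and q00: "0 < q 0 0" "q 0 0 < 1"
    and th1_pos: "0 < theta1 r q p00 p10"
    and mgf: "mgf_finite_near0 p00" "mgf_finite_near0 p10"
    and V_inv1: "\<And>i j. i \<le> r \<Longrightarrow> j \<le> r \<Longrightarrow> (\<Sum>k\<le>r. V i k * Vinv k j) = (if i = j then 1 else 0)"
    and V_inv2: "\<And>i j. i \<le> r \<Longrightarrow> j \<le> r \<Longrightarrow> (\<Sum>k\<le>r. Vinv i k * V k j) = (if i = j then 1 else 0)"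
    and diag: "\<And>x z. x \<le> r \<Longrightarrow> z \<le> r \<Longrightarrow>
                 complex_of_real (Mmat r q x z) = (\<Sum>y\<le>r. V x y * lam y * Vinv y z)"
    and lam_r: "lam r = 1"
    and V_col_r: "\<And>x. x \<le> r \<Longrightarrow> V x r = (if x = r then 1 else 0)"
    and X_meas: "\<And>k t. X k t \<in> measurable M (count_space UNIV)"
    and Xp_meas: "\<And>k t. Xp k t \<in> measurable M (count_space UNIV)"
    and Yp_meas: "\<And>k t. Yp k t \<in> measurable M (count_space UNIV)"
    and law: "\<And>k xs xps ys. k \<in> {1..m} \<Longrightarrow> (\<forall>t\<le>T. xs t \<le> r) \<Longrightarrow> (\<forall>t\<in>{1..T}. xps t \<le> r) \<Longrightarrow>
       measure M {\<omega> \<in> space M. \<forall>t\<le>T. X k t \<omega> = xs t \<and>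
                      (1 \<le> t \<longrightarrow> Xp k t \<omega> = xps t \<and> Yp k t \<omega> = ys t)}
       = \<nu> (xs 0) * (\<Prod>t\<in>{1..T}. Ml r q (xps t) (xs (t - 1)) * Ms q (xs t) (xps t)
                                 * pmf (emis p00 p10 (xs t) (xps t)) (ys t))"
    and U_meas: "\<And>t k. U t k \<in> borel_measurable M"
    and U_nonneg: "\<And>t k \<omega>. 1 \<le> t \<Longrightarrow> 1 \<le> k \<Longrightarrow> \<omega> \<in> space M \<Longrightarrow> 0 \<le> U t k \<omega>"
    and U_ident: "\<And>t k. 1 \<le> t \<Longrightarrow> 1 \<le> k \<Longrightarrow> distr M borel (U t k) = distr M borel (U 1 1)"
    and U_int: "integrable M (U 1 1)" "integrable M (\<lambda>\<omega>. (U 1 1 \<omega>)\<^sup>2)"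
    and U_mean: "integral\<^sup>L M (U 1 1) = u" and u_pos: "0 < u"
    and eps_meas: "\<And>t. eps t \<in> borel_measurable M"
    and eps_int: "\<And>t. t \<in> {1..T} \<Longrightarrow> integrable M (\<lambda>\<omega>. (eps t \<omega>)\<^sup>2)"
    and eps_mean: "\<And>t. t \<in> {1..T} \<Longrightarrow> integral\<^sup>L M (eps t) = 0"
    and eps_var: "\<And>t. t \<in> {1..T} \<Longrightarrow> prob_space.variance M (eps t) = (\<sigma> t)\<^sup>2"
    and indep: "prob_space.indep_sets M (src_sigma M T X Xp Yp U eps) (src_index m T)"
    and c_pos: "0 < c"
begin

lemma fluo_k: "k \<in> {1..m} \<Longrightarrow> fluo M r T q \<nu> p00 p10 (X k) (Xp k) (Yp k)"
  apply unfold_locales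
  using r1 T1 q_range q_sum nu_nonneg nu_sum X_meas Xp_meas Yp_meas law mgf_moments[OF mgf(1)] mgf_moments[OF mgf(2)]
  by auto

abbreviation "SS \<equiv> src_sigma M T X Xp Yp U eps"

lemma indep_src: "indep_sets SS (src_index m T)"
  using indep by simp

lemma SS_pow: "SS i \<subseteq> Pow (space M)"
proof (cases i)
  case (Fluo k)
  have "fluo_gen M T X Xp Yp k \<subseteq> Pow (space M)" unfolding fluo_gen_def by auto
  then show ?thesis using Fluo by (auto simp: src_sigma_def dest: sigma_sets_into_sp)
qed (auto simp: src_sigma_def)

lemma SS_Int_stable: "Int_stable (SS i)"
proof (cases i)
  case (Fluo k)
  have "fluo_gen M T X Xp Yp k \<subseteq> Pow (space M)" unfolding fluo_gen_def by auto
  then have "sigma_algebra (space M) (sigma_sets (space M) (fluo_gen M T X Xp Yp k))"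
    by (rule sigma_algebra_sigma_sets)
  then have "algebra (space M) (sigma_sets (space M) (fluo_gen M T X Xp Yp k))"
    by (simp add: sigma_algebra_def ring_of_sets_def algebra_iff_Int)
  then show ?thesis using Fluo by (simp add: src_sigma_def algebra.Int_stable)
next
  case (Unoise t k)
  show ?thesis unfolding Unoise src_sigma_def
  proof (rule Int_stableI, clarsimp)
    fix A B :: "real set" assume "A \<in> sets borel" "B \<in> sets borel"
    then show "\<exists>C. U t k -` A \<inter> space M \<inter> (U t k -` B \<inter> space M) = U t k -` C \<inter> space M \<and> C \<in> sets borel"
      by (intro exI[of _ "A \<inter> B"]) auto
  qed
next
  case (Enoise t)
  show ?thesis unfolding Enoise src_sigma_def
  proof (rule Int_stableI, clarsimp)
    fix A B :: "real set" assume "A \<in> sets borel" "B \<in> sets borel"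
    then show "\<exists>C. eps t -` A \<inter> space M \<inter> (eps t -` B \<inter> space M) = eps t -` C \<inter> space M \<and> C \<in> sets borel"
      by (intro exI[of _ "A \<inter> B"]) auto
  qed
qed

lemma blocks_indep:
  fixes I :: "nat \<Rightarrow> src set"
  assumes "\<And>j. j \<in> J \<Longrightarrow> I j \<subseteq> src_index m T" "disjoint_family_on I J"
  shows "indep_sets (\<lambda>j. sigma_sets (space M) (\<Union>i\<in>I j. SS i)) J"
proof (rule indep_sets_collect_sigma)
  show "indep_sets SS (\<Union>j\<in>J. I j)"
    by (rule indep_sets_mono_index[OF _ indep_src]) (use assms in auto)
qed (use assms SS_Int_stable in auto)

lemma block_meas:
  assumes "i \<in> I" "{f -` A \<inter> space M | A. A \<in> sets N} \<subseteq> SS i" "\<And>\<omega>. f \<omega> \<in> space N"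
  shows "f \<in> measurable (sigma (space M) (\<Union>i\<in>I. SS i)) N"
proof (rule measurableI)
  have pw: "(\<Union>i\<in>I. SS i) \<subseteq> Pow (space M)" using SS_pow by auto
  fix A assume "A \<in> sets N"
  then have "f -` A \<inter> space M \<in> (\<Union>i\<in>I. SS i)" using assms(1,2) by blast
  then show "f -` A \<inter> space (sigma (space M) (\<Union>i\<in>I. SS i)) \<in> sets (sigma (space M) (\<Union>i\<in>I. SS i))"
    using pw by (simp add: sets_measure_of space_measure_of_conv)
qed (use assms(3) in auto)

lemma blocks_sub: "(\<Union>i\<in>I. SS i) \<subseteq> Pow (space M)"
  using SS_pow by auto

lemma pre_Fluo:
  assumes "t \<in> {1..T}"
  shows "{Yp k t -` A \<inter> space M | A. A \<in> sets (count_space UNIV)} \<subseteq> SS (Fluo k)"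
proof -
  have "{Yp k t -` A \<inter> space M | A. A \<in> sets (count_space UNIV)} \<subseteq> fluo_gen M T X Xp Yp k"
    using assms unfolding fluo_gen_def by blast
  then show ?thesis by (auto simp: src_sigma_def)
qed

lemma pre_U: "{U t j -` A \<inter> space M | A. A \<in> sets borel} \<subseteq> SS (Unoise t j)"
  by (simp add: src_sigma_def)

lemma pre_eps: "{eps t -` A \<inter> space M | A. A \<in> sets borel} \<subseteq> SS (Enoise t)"
  by (simp add: src_sigma_def)

lemma pre_Fluo_f:
  assumes "t \<in> {1..T}"
  shows "{(\<lambda>\<omega>. f (Yp k t \<omega>)) -` A \<inter> space M | A. A \<in> sets borel} \<subseteq> SS (Fluo k)"
proof -
  have "{(\<lambda>\<omega>. f (Yp k t \<omega>)) -` A \<inter> space M | A. A \<in> sets borel} \<subseteq> {Yp k t -` A \<inter> space M | A. A \<in> sets (count_space UNIV)}"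
  proof safe
    fix A show "\<exists>B. (\<lambda>\<omega>. f (Yp k t \<omega>)) -` A \<inter> space M = Yp k t -` B \<inter> space M \<and> B \<in> sets (count_space UNIV)"
      by (intro exI[of _ "f -` A"]) auto
  qed
  then show ?thesis using pre_Fluo[OF assms, of k] by blast
qed


definition "th1 = theta1 r q p00 p10"
definition "S2 = (\<Sum>x\<le>r. Ms q x 0 * pmf_mom2 (emis p00 p10 x 0))"
definition "PP t = chainf r q (\<lambda>_ _ _. 1) \<nu> t 0 / q 0 0"
definition "CC t t' = chainf r q (\<lambda>_ _ _. 1) (\<lambda>z. PP t' * (Ms q z 0 * pmf_mean (emis p00 p10 z 0))) (t - t') 0 / q 0 0"

lemma q0ne: "q 0 0 \<noteq> 0" using q00 by simp

lemma Yk1: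
  assumes k: "k \<in> {1..m}" and t: "t \<in> {1..T}"
  shows "integrable M (\<lambda>\<omega>. real (Yp k t \<omega>)) \<and> expectation (\<lambda>\<omega>. real (Yp k t \<omega>)) = th1 * PP t"
proof -
  interpret F: fluo M r T q \<nu> p00 p10 "X k" "Xp k" "Yp k" by (rule fluo_k[OF k])
  show ?thesis using F.mom_Y1[OF t q0ne] by (simp add: F.m1_def F.Pt_def th1_def theta1_def PP_def)
qed

lemma Yk2:
  assumes k: "k \<in> {1..m}" and t: "t \<in> {1..T}"
  shows "integrable M (\<lambda>\<omega>. (real (Yp k t \<omega>))\<^sup>2) \<and> expectation (\<lambda>\<omega>. (real (Yp k t \<omega>))\<^sup>2) = S2 * PP t"
proof -
  interpret F: fluo M r T q \<nu> p00 p10 "X k" "Xp k" "Yp k" by (rule fluo_k[OF k])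
  show ?thesis using F.mom_Y2[OF t q0ne] by (simp add: F.m2_def F.Pt_def S2_def PP_def)
qed

lemma YkYk:
  assumes k: "k \<in> {1..m}" and t: "1 \<le> t'" "t' < t" "t \<le> T"
  shows "integrable M (\<lambda>\<omega>. real (Yp k t \<omega>) * real (Yp k t' \<omega>)) \<and> expectation (\<lambda>\<omega>. real (Yp k t \<omega>) * real (Yp k t' \<omega>)) = th1 * CC t t'"
proof -
  interpret F: fluo M r T q \<nu> p00 p10 "X k" "Xp k" "Yp k" by (rule fluo_k[OF k])
  show ?thesis using F.mom_YY[OF t q0ne] by (simp add: F.m1_def F.Pt_def th1_def theta1_def PP_def CC_def)
qed

lemma Ykl:
  assumes kl: "k \<in> {1..m}" "l \<in> {1..m}" "k \<noteq> l" and t: "t \<in> {1..T}" "t' \<in> {1..T}"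
  shows "integrable M (\<lambda>\<omega>. real (Yp k t \<omega>) * real (Yp l t' \<omega>)) \<and> expectation (\<lambda>\<omega>. real (Yp k t \<omega>) * real (Yp l t' \<omega>)) = (th1 * PP t) * (th1 * PP t')"
proof -
  have "integrable M (\<lambda>\<omega>. real (Yp k t \<omega>) * real (Yp l t' \<omega>)) \<and> expectation (\<lambda>\<omega>. real (Yp k t \<omega>) * real (Yp l t' \<omega>))
     = expectation (\<lambda>\<omega>. real (Yp k t \<omega>)) * expectation (\<lambda>\<omega>. real (Yp l t' \<omega>))"
  proof (rule indep_pair[OF indep_src])
    show "Fluo k \<in> src_index m T" "Fluo l \<in> src_index m T" "Fluo k \<noteq> Fluo l" using kl by (auto simp: src_index_def)
    show "(\<lambda>\<omega>. real (Yp k t \<omega>)) \<in> borel_measurable M" "(\<lambda>\<omega>. real (Yp l t' \<omega>)) \<in> borel_measurable M"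
      using Yp_meas by measurable
    show "{(\<lambda>\<omega>. real (Yp k t \<omega>)) -` A \<inter> space M |A. A \<in> sets borel} \<subseteq> SS (Fluo k)"
      by (rule pre_Fluo_f[OF t(1)])
    show "{(\<lambda>\<omega>. real (Yp l t' \<omega>)) -` A \<inter> space M |A. A \<in> sets borel} \<subseteq> SS (Fluo l)"
      by (rule pre_Fluo_f[OF t(2)])
    show "integrable M (\<lambda>\<omega>. real (Yp k t \<omega>))" "integrable M (\<lambda>\<omega>. real (Yp l t' \<omega>))"
      using Yk1 kl t by auto
  qed
  then show ?thesis using Yk1 kl t by simp
qed

lemma sum_if_eq:
  fixes Dd Oo :: real
  assumes "finite K" "k \<in> K"
  shows "(\<Sum>l\<in>K. if k = l then Dd else Oo) = Dd + (real (card K) - 1) * Oo"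
proof -
  have "(\<Sum>l\<in>K. if k = l then Dd else Oo) = Dd + (\<Sum>l\<in>K - {k}. if k = l then Dd else Oo)"
    using assms by (simp add: sum.remove)
  also have "(\<Sum>l\<in>K - {k}. if k = l then Dd else Oo) = (\<Sum>l\<in>K - {k}. Oo)"
    by (intro sum.cong) auto
  also have "\<dots> = (real (card K) - 1) * Oo"
  proof -
    have "0 < card K" using assms card_gt_0_iff by auto
    then show ?thesis using assms by (simp add: card_Diff_singleton of_nat_diff)
  qed
  finally show ?thesis .
qed

lemma sum_prod_moments:
  fixes A B :: "nat \<Rightarrow> 'a \<Rightarrow> real"
  assumes K: "finite K"
    and h: "\<And>k l. k \<in> K \<Longrightarrow> l \<in> K \<Longrightarrow> integrable M (\<lambda>\<omega>. A k \<omega> * B l \<omega>) \<and> expectation (\<lambda>\<omega>. A k \<omega> * B l \<omega>) = (if k = l then Dd else Oo)"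
  shows "integrable M (\<lambda>\<omega>. (\<Sum>k\<in>K. A k \<omega>) * (\<Sum>l\<in>K. B l \<omega>)) \<and>
     expectation (\<lambda>\<omega>. (\<Sum>k\<in>K. A k \<omega>) * (\<Sum>l\<in>K. B l \<omega>)) = real (card K) * Dd + real (card K) * (real (card K) - 1) * Oo"
proof -
  have e: "(\<lambda>\<omega>. (\<Sum>k\<in>K. A k \<omega>) * (\<Sum>l\<in>K. B l \<omega>)) = (\<lambda>\<omega>. \<Sum>k\<in>K. \<Sum>l\<in>K. A k \<omega> * B l \<omega>)"
    by (simp add: sum_product)
  have i: "integrable M (\<lambda>\<omega>. \<Sum>k\<in>K. \<Sum>l\<in>K. A k \<omega> * B l \<omega>)"
    by (rule Bochner_Integration.integrable_sum, rule Bochner_Integration.integrable_sum) (use h in blast)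
  have "expectation (\<lambda>\<omega>. \<Sum>k\<in>K. \<Sum>l\<in>K. A k \<omega> * B l \<omega>) = (\<Sum>k\<in>K. \<Sum>l\<in>K. expectation (\<lambda>\<omega>. A k \<omega> * B l \<omega>))"
    using h by (subst Bochner_Integration.integral_sum, force, intro sum.cong refl, subst Bochner_Integration.integral_sum) auto
  also have "\<dots> = (\<Sum>k\<in>K. \<Sum>l\<in>K. if k = l then Dd else Oo)"
    using h by (intro sum.cong refl) auto
  also have "\<dots> = (\<Sum>k\<in>K. Dd + (real (card K) - 1) * Oo)"
    using K by (intro sum.cong refl sum_if_eq) auto
  also have "\<dots> = real (card K) * Dd + real (card K) * (real (card K) - 1) * Oo"
    by (simp add: algebra_simps)
  finally show ?thesis using i e by simp
qed

abbreviation "Nt t \<omega> \<equiv> photon_sum Yp m t \<omega>"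

lemma realN: "real (Nt t \<omega>) = (\<Sum>k\<in>{1..m}. real (Yp k t \<omega>))"
  by (simp add: photon_sum_def)

lemma EN1:
  assumes t: "t \<in> {1..T}"
  shows "integrable M (\<lambda>\<omega>. real (Nt t \<omega>)) \<and> expectation (\<lambda>\<omega>. real (Nt t \<omega>)) = real m * (th1 * PP t)"
proof -
  have "integrable M (\<lambda>\<omega>. \<Sum>k\<in>{1..m}. real (Yp k t \<omega>))" by (rule Bochner_Integration.integrable_sum) (use Yk1 t in blast)
  moreover have "expectation (\<lambda>\<omega>. \<Sum>k\<in>{1..m}. real (Yp k t \<omega>)) = (\<Sum>k\<in>{1..m}. th1 * PP t)"
    using Yk1 t by (subst Bochner_Integration.integral_sum) auto
  ultimately show ?thesis by (simp add: realN)
qed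

lemma EN2:
  assumes t: "t \<in> {1..T}"
  shows "integrable M (\<lambda>\<omega>. (real (Nt t \<omega>))\<^sup>2) \<and> expectation (\<lambda>\<omega>. (real (Nt t \<omega>))\<^sup>2)
     = real m * (S2 * PP t) + real m * (real m - 1) * ((th1 * PP t) * (th1 * PP t))"
proof -
  have "integrable M (\<lambda>\<omega>. (\<Sum>k\<in>{1..m}. real (Yp k t \<omega>)) * (\<Sum>l\<in>{1..m}. real (Yp l t \<omega>))) \<and>
     expectation (\<lambda>\<omega>. (\<Sum>k\<in>{1..m}. real (Yp k t \<omega>)) * (\<Sum>l\<in>{1..m}. real (Yp l t \<omega>)))
     = real (card {1..m}) * (S2 * PP t) + real (card {1..m}) * (real (card {1..m}) - 1) * ((th1 * PP t) * (th1 * PP t))"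
  proof (rule sum_prod_moments)
    fix k l assume "k \<in> {1..m}" "l \<in> {1..m}"
    then show "integrable M (\<lambda>\<omega>. real (Yp k t \<omega>) * real (Yp l t \<omega>)) \<and> expectation (\<lambda>\<omega>. real (Yp k t \<omega>) * real (Yp l t \<omega>))
      = (if k = l then S2 * PP t else th1 * PP t * (th1 * PP t))"
      using Yk2[of k t] Ykl[of k l t t] t by (auto simp: power2_eq_square)
  qed simp
  then show ?thesis by (simp add: realN power2_eq_square)
qed

lemma ENN:
  assumes t: "1 \<le> t'" "t' < t" "t \<le> T"
  shows "integrable M (\<lambda>\<omega>. real (Nt t \<omega>) * real (Nt t' \<omega>)) \<and> expectation (\<lambda>\<omega>. real (Nt t \<omega>) * real (Nt t' \<omega>))
     = real m * (th1 * CC t t') + real m * (real m - 1) * ((th1 * PP t) * (th1 * PP t'))"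
proof -
  have "integrable M (\<lambda>\<omega>. (\<Sum>k\<in>{1..m}. real (Yp k t \<omega>)) * (\<Sum>l\<in>{1..m}. real (Yp l t' \<omega>))) \<and>
     expectation (\<lambda>\<omega>. (\<Sum>k\<in>{1..m}. real (Yp k t \<omega>)) * (\<Sum>l\<in>{1..m}. real (Yp l t' \<omega>)))
     = real (card {1..m}) * (th1 * CC t t') + real (card {1..m}) * (real (card {1..m}) - 1) * ((th1 * PP t) * (th1 * PP t'))"
  proof (rule sum_prod_moments)
    fix k l assume "k \<in> {1..m}" "l \<in> {1..m}"
    then show "integrable M (\<lambda>\<omega>. real (Yp k t \<omega>) * real (Yp l t' \<omega>)) \<and> expectation (\<lambda>\<omega>. real (Yp k t \<omega>) * real (Yp l t' \<omega>))
      = (if k = l then th1 * CC t t' else th1 * PP t * (th1 * PP t'))"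
      using YkYk[of k t' t] Ykl[of k l t t'] t by auto
  qed simp
  then show ?thesis by (simp add: realN)
qed
end


context full
begin

definition "s2 = expectation (\<lambda>\<omega>. (U 1 1 \<omega>)\<^sup>2)"

lemma U_gen:
  fixes f :: "real \<Rightarrow> real"
  assumes "1 \<le> t" "1 \<le> j" and f: "f \<in> borel_measurable borel"
  shows "integrable M (\<lambda>\<omega>. f (U t j \<omega>)) = integrable M (\<lambda>\<omega>. f (U 1 1 \<omega>)) \<and>
         expectation (\<lambda>\<omega>. f (U t j \<omega>)) = expectation (\<lambda>\<omega>. f (U 1 1 \<omega>))"
proof -
  have d: "distr M borel (U t j) = distr M borel (U 1 1)" by (rule U_ident[OF assms(1,2)])
  have i1: "integrable (distr M borel (U t j)) f \<longleftrightarrow> integrable M (\<lambda>x. f (U t j x))"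
    by (rule integrable_distr_eq[OF U_meas f])
  have i2: "integrable (distr M borel (U 1 1)) f \<longleftrightarrow> integrable M (\<lambda>x. f (U 1 1 x))"
    by (rule integrable_distr_eq[OF U_meas f])
  have e1: "integral\<^sup>L (distr M borel (U t j)) f = integral\<^sup>L M (\<lambda>x. f (U t j x))"
    by (rule integral_distr[OF U_meas f])
  have e2: "integral\<^sup>L (distr M borel (U 1 1)) f = integral\<^sup>L M (\<lambda>x. f (U 1 1 x))"
    by (rule integral_distr[OF U_meas f])
  show ?thesis unfolding i1[symmetric] i2[symmetric] e1[symmetric] e2[symmetric] d by simp
qed

lemma U1: "1 \<le> t \<Longrightarrow> 1 \<le> j \<Longrightarrow> integrable M (U t j) \<and> expectation (U t j) = u"
  using U_gen[of t j "\<lambda>x. x"] U_int U_mean by simp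

lemma U2: "1 \<le> t \<Longrightarrow> 1 \<le> j \<Longrightarrow> integrable M (\<lambda>\<omega>. (U t j \<omega>)\<^sup>2) \<and> expectation (\<lambda>\<omega>. (U t j \<omega>)\<^sup>2) = s2"
  using U_gen[of t j "\<lambda>x. x\<^sup>2"] U_int s2_def by simp

lemma UU:
  assumes "1 \<le> t" "1 \<le> i" "1 \<le> j" "i \<noteq> j"
  shows "integrable M (\<lambda>\<omega>. U t i \<omega> * U t j \<omega>) \<and> expectation (\<lambda>\<omega>. U t i \<omega> * U t j \<omega>) = u * u"
proof -
  have "integrable M (\<lambda>\<omega>. U t i \<omega> * U t j \<omega>) \<and> expectation (\<lambda>\<omega>. U t i \<omega> * U t j \<omega>) = expectation (U t i) * expectation (U t j)"
    by (rule indep_pair[OF indep_src, of "Unoise t i" "Unoise t j"])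
       (use assms U_meas pre_U U1 in \<open>auto simp: src_index_def\<close>)
  then show ?thesis using U1 assms by simp
qed

definition "Sn t n \<omega> = (\<Sum>i\<in>{1..n}. U t i \<omega>)"

lemma Sn_meas[measurable]: "Sn t n \<in> borel_measurable M"
  unfolding Sn_def using U_meas by measurable

lemma ES1: "1 \<le> t \<Longrightarrow> integrable M (Sn t n) \<and> expectation (Sn t n) = real n * u"
proof -
  assume t: "1 \<le> t"
  have "integrable M (\<lambda>\<omega>. \<Sum>i\<in>{1..n}. U t i \<omega>)" by (rule Bochner_Integration.integrable_sum) (use U1 t in auto)
  moreover have "expectation (\<lambda>\<omega>. \<Sum>i\<in>{1..n}. U t i \<omega>) = (\<Sum>i\<in>{1..n}. u)"
    using U1 t by (subst Bochner_Integration.integral_sum) auto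
  ultimately show ?thesis by (simp add: Sn_def[abs_def])
qed

lemma ES2: "1 \<le> t \<Longrightarrow> integrable M (\<lambda>\<omega>. (Sn t n \<omega>)\<^sup>2) \<and> expectation (\<lambda>\<omega>. (Sn t n \<omega>)\<^sup>2) = real n * s2 + real n * (real n - 1) * (u * u)"
proof -
  assume t: "1 \<le> t"
  have "integrable M (\<lambda>\<omega>. (\<Sum>i\<in>{1..n}. U t i \<omega>) * (\<Sum>j\<in>{1..n}. U t j \<omega>)) \<and>
     expectation (\<lambda>\<omega>. (\<Sum>i\<in>{1..n}. U t i \<omega>) * (\<Sum>j\<in>{1..n}. U t j \<omega>))
     = real (card {1..n}) * s2 + real (card {1..n}) * (real (card {1..n}) - 1) * (u * u)"
  proof (rule sum_prod_moments)
    fix i j assume "i \<in> {1..n}" "j \<in> {1..n}"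
    then show "integrable M (\<lambda>\<omega>. U t i \<omega> * U t j \<omega>) \<and> expectation (\<lambda>\<omega>. U t i \<omega> * U t j \<omega>) = (if i = j then s2 else u * u)"
      using U2[of t i] UU[of t i j] t by (auto simp: power2_eq_square)
  qed simp
  then show ?thesis by (simp add: Sn_def power2_eq_square)
qed

lemma Sn_nonneg: "1 \<le> t \<Longrightarrow> \<omega> \<in> space M \<Longrightarrow> 0 \<le> Sn t n \<omega>"
  unfolding Sn_def using U_nonneg by (auto intro!: sum_nonneg)

lemma Eproc_Sn: "Eproc U Yp m t \<omega> = Sn t (Nt t \<omega>) \<omega>"
  by (simp add: Eproc_def Sn_def)

lemma ES1nn: "1 \<le> t \<Longrightarrow> (\<integral>\<^sup>+\<omega>. ennreal (Sn t n \<omega>) \<partial>M) = ennreal (real n * u)"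
  using nn_integral_eq_integrable[of "Sn t n" M "real n * u"] ES1[of t n] Sn_nonneg[of t] u_pos by auto

lemma ES2nn: "1 \<le> t \<Longrightarrow> (\<integral>\<^sup>+\<omega>. ennreal ((Sn t n \<omega>)\<^sup>2) \<partial>M) = ennreal (real n * s2 + real n * (real n - 1) * (u * u))"
proof -
  assume t: "1 \<le> t"
  have s2: "0 \<le> s2" unfolding s2_def by simp
  have "0 \<le> real n * s2 + real n * (real n - 1) * (u * u)"
    using s2 by (cases n) (auto intro!: add_nonneg_nonneg mult_nonneg_nonneg)
  then show ?thesis
    using nn_integral_eq_integrable[of "\<lambda>\<omega>. (Sn t n \<omega>)\<^sup>2" M] ES2[OF t, of n] by auto
qed

end


context full
begin

definition "BI2 t = (\<lambda>j::nat. if j = 0 then Fluo ` {1..m} else {Unoise t i | i. 1 \<le> i})"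
definition "BI3 t t' = (\<lambda>j::nat. if j = 0 then Fluo ` {1..m} else if j = 1 then {Unoise t i | i. 1 \<le> i} else {Unoise t' i | i. 1 \<le> i})"

lemma ind2: "t \<in> {1..T} \<Longrightarrow> indep_sets (\<lambda>j. sigma_sets (space M) (\<Union>i\<in>BI2 t j. SS i)) {0, 1}"
  by (rule blocks_indep) (auto simp: BI2_def src_index_def disjoint_family_on_def)

lemma ind3: "t \<in> {1..T} \<Longrightarrow> t' \<in> {1..T} \<Longrightarrow> t \<noteq> t' \<Longrightarrow> indep_sets (\<lambda>j. sigma_sets (space M) (\<Union>i\<in>BI3 t t' j. SS i)) {0, 1, 2}"
  by (rule blocks_indep) (auto simp: BI3_def src_index_def disjoint_family_on_def)

lemma meas_N_block:
  assumes "Fluo ` {1..m} \<subseteq> I" "t \<in> {1..T}"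
  shows "(\<lambda>\<omega>. Nt t \<omega>) \<in> measurable (sigma (space M) (\<Union>i\<in>I. SS i)) (count_space UNIV)"
proof -
  define Y' where "Y' k = (if k \<in> {1..m} then Yp k t else (\<lambda>_. 0))" for k
  have [measurable]: "Y' k \<in> measurable (sigma (space M) (\<Union>i\<in>I. SS i)) (count_space UNIV)" for k
  proof (cases "k \<in> {1..m}")
    case True
    have "Yp k t \<in> measurable (sigma (space M) (\<Union>i\<in>I. SS i)) (count_space UNIV)"
    proof (rule block_meas[of "Fluo k"])
      show "Fluo k \<in> I" using True assms by auto
      show "{Yp k t -` A \<inter> space M |A. A \<in> sets (count_space UNIV)} \<subseteq> SS (Fluo k)"
        using pre_Fluo[of t k] assms by blast
    qed simp
    then show ?thesis unfolding Y'_def using True by simp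
  qed (auto simp: Y'_def)
  have "(\<lambda>\<omega>. Nt t \<omega>) = (\<lambda>\<omega>. \<Sum>k\<in>{1..m}. Y' k \<omega>)"
    by (auto simp: photon_sum_def Y'_def intro!: sum.cong)
  also have "\<dots> \<in> measurable (sigma (space M) (\<Union>i\<in>I. SS i)) (count_space UNIV)" by measurable
  finally show ?thesis .
qed

lemma meas_S_block:
  assumes "\<And>i. 1 \<le> i \<Longrightarrow> Unoise t i \<in> I"
  shows "Sn t n \<in> measurable (sigma (space M) (\<Union>i\<in>I. SS i)) borel"
proof -
  define U' where "U' i = (if 1 \<le> i then U t i else (\<lambda>_. 0))" for i
  have [measurable]: "U' i \<in> measurable (sigma (space M) (\<Union>i\<in>I. SS i)) borel" for i
  proof (cases "1 \<le> i")
    case True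
    have "U t i \<in> measurable (sigma (space M) (\<Union>i\<in>I. SS i)) borel"
    proof (rule block_meas[of "Unoise t i"])
      show "Unoise t i \<in> I" using True assms by auto
      show "{U t i -` A \<inter> space M |A. A \<in> sets borel} \<subseteq> SS (Unoise t i)"
        using pre_U[of t i] by blast
    qed simp
    then show ?thesis unfolding U'_def using True by simp
  qed (auto simp: U'_def)
  have "Sn t n = (\<lambda>\<omega>. \<Sum>i\<in>{1..n}. U' i \<omega>)"
    by (auto simp: Sn_def U'_def intro!: sum.cong)
  also have "\<dots> \<in> measurable (sigma (space M) (\<Union>i\<in>I. SS i)) borel" by measurable
  finally show ?thesis .
qed

lemma Nt_meas[measurable]: "(\<lambda>\<omega>. Nt t \<omega>) \<in> measurable M (count_space UNIV)"
  unfolding photon_sum_def using Yp_meas by measurable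

lemma nn_rv':
  fixes g :: "nat \<Rightarrow> ennreal"
  assumes N: "N \<in> measurable M (count_space UNIV)"
  shows "(\<integral>\<^sup>+\<omega>. g (N \<omega>) \<partial>M) = (\<Sum>n. emeasure M {\<omega>\<in>space M. N \<omega> = n} * g n)"
proof -
  have "(\<integral>\<^sup>+\<omega>. g (N \<omega>) \<partial>M) = (\<integral>\<^sup>+\<omega>. g (N \<omega>) * indicator (space M) \<omega> \<partial>M)"
    by (rule nn_integral_cong) auto
  also have "\<dots> = (\<Sum>a. g a * emeasure M (space M \<inter> {\<omega>\<in>space M. N \<omega> = a}))"
    by (rule nn_integral_nat_rv[OF N]) auto
  also have "\<dots> = (\<Sum>n. emeasure M {\<omega>\<in>space M. N \<omega> = n} * g n)"
    by (intro suminf_cong) (simp add: mult.commute Int_absorb1 Collect_subset)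
  finally show ?thesis .
qed

lemma nn_to_int:
  fixes f :: "'a \<Rightarrow> real"
  assumes "f \<in> borel_measurable M" "\<And>\<omega>. \<omega> \<in> space M \<Longrightarrow> 0 \<le> f \<omega>" "0 \<le> x"
    "(\<integral>\<^sup>+\<omega>. ennreal (f \<omega>) \<partial>M) = ennreal x"
  shows "integrable M f \<and> expectation f = x"
  using nn_integral_eq_integrable[of f M x] assms by auto


lemma Eproc_meas[measurable]: "Eproc U Yp m t \<in> borel_measurable M"
  unfolding Eproc_def photon_sum_def using U_meas Yp_meas by measurable

lemma mu_nonneg: "t \<in> {1..T} \<Longrightarrow> 0 \<le> real m * (th1 * PP t)"
  using EN1[of t] Bochner_Integration.integral_nonneg[of M "\<lambda>\<omega>. real (Nt t \<omega>)"] by simp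

lemma BI2_sub: "(\<Union>i\<in>BI2 t j. SS i) \<subseteq> Pow (space M)" by (rule blocks_sub)
lemma BI3_sub: "(\<Union>i\<in>BI3 t t' j. SS i) \<subseteq> Pow (space M)" by (rule blocks_sub)

lemma EE_gen:
  assumes t: "t \<in> {1..T}" and h: "\<And>x. 0 \<le> h x" and hm: "h \<in> borel_measurable borel"
  shows "(\<integral>\<^sup>+\<omega>. ennreal (h (Eproc U Yp m t \<omega>)) \<partial>M)
      = (\<Sum>n. emeasure M {\<omega>\<in>space M. Nt t \<omega> = n} * (\<integral>\<^sup>+\<omega>. ennreal (h (Sn t n \<omega>)) \<partial>M))"
proof -
  have "(\<integral>\<^sup>+\<omega>. ennreal (h (Eproc U Yp m t \<omega>)) \<partial>M) = (\<integral>\<^sup>+\<omega>. (\<lambda>n \<omega>. ennreal (h (Sn t n \<omega>))) (Nt t \<omega>) \<omega> \<partial>M)"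
    by (simp add: Eproc_Sn)
  also have "\<dots> = (\<Sum>n. emeasure M {\<omega>\<in>space M. Nt t \<omega> = n} * (\<integral>\<^sup>+\<omega>. ennreal (h (Sn t n \<omega>)) \<partial>M))"
  proof (rule cond2[OF ind2[OF t] BI2_sub BI2_sub])
    show "(\<lambda>\<omega>. Nt t \<omega>) \<in> measurable (sigma (space M) (\<Union>i\<in>BI2 t 0. SS i)) (count_space UNIV)"
      by (rule meas_N_block) (use t in \<open>auto simp: BI2_def\<close>)
    show "(\<lambda>\<omega>. Nt t \<omega>) \<in> measurable M (count_space UNIV)" by measurable
    fix n
    have "Sn t n \<in> measurable (sigma (space M) (\<Union>i\<in>BI2 t 1. SS i)) borel"
      by (rule meas_S_block) (auto simp: BI2_def)
    then show "(\<lambda>\<omega>. ennreal (h (Sn t n \<omega>))) \<in> measurable (sigma (space M) (\<Union>i\<in>BI2 t 1. SS i)) borel"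
      using hm by measurable
    show "(\<lambda>\<omega>. ennreal (h (Sn t n \<omega>))) \<in> borel_measurable M" using hm by measurable
  qed
  finally show ?thesis .
qed

lemma EE1:
  assumes t: "t \<in> {1..T}"
  shows "integrable M (Eproc U Yp m t) \<and> expectation (Eproc U Yp m t) = u * (real m * (th1 * PP t))"
proof -
  have "(\<integral>\<^sup>+\<omega>. ennreal (Eproc U Yp m t \<omega>) \<partial>M) = (\<integral>\<^sup>+\<omega>. ennreal (max 0 (Eproc U Yp m t \<omega>)) \<partial>M)"
    by (intro nn_integral_cong) (simp add: Eproc_Sn Sn_nonneg t max_absorb2)
  also have "\<dots> = (\<Sum>n. emeasure M {\<omega>\<in>space M. Nt t \<omega> = n} * (\<integral>\<^sup>+\<omega>. ennreal (max 0 (Sn t n \<omega>)) \<partial>M))"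
    by (rule EE_gen[OF t]) auto
  also have "\<dots> = (\<Sum>n. emeasure M {\<omega>\<in>space M. Nt t \<omega> = n} * ennreal (u * real n))"
  proof (intro suminf_cong arg_cong2[where f="(*)"] refl)
    fix n
    have "(\<integral>\<^sup>+\<omega>. ennreal (max 0 (Sn t n \<omega>)) \<partial>M) = (\<integral>\<^sup>+\<omega>. ennreal (Sn t n \<omega>) \<partial>M)"
      by (intro nn_integral_cong) (simp add: Sn_nonneg t max_absorb2)
    then show "(\<integral>\<^sup>+\<omega>. ennreal (max 0 (Sn t n \<omega>)) \<partial>M) = ennreal (u * real n)"
      using ES1nn[of t n] t by (simp add: mult.commute)
  qed
  also have "\<dots> = (\<integral>\<^sup>+\<omega>. ennreal (u * real (Nt t \<omega>)) \<partial>M)"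
    by (rule nn_rv'[symmetric]) measurable
  also have "\<dots> = ennreal (u * (real m * (th1 * PP t)))"
  proof -
    have i: "integrable M (\<lambda>\<omega>. u * real (Nt t \<omega>))" using EN1[OF t] by simp
    have "(\<integral>\<^sup>+\<omega>. ennreal (u * real (Nt t \<omega>)) \<partial>M) = ennreal (expectation (\<lambda>\<omega>. u * real (Nt t \<omega>)))"
      by (rule nn_integral_eq_integral[OF i]) (use u_pos in simp)
    then show ?thesis using EN1[OF t] by simp
  qed
  finally show ?thesis
    by (intro nn_to_int) (use Eproc_Sn Sn_nonneg t u_pos mu_nonneg[OF t] in \<open>auto simp: Eproc_def\<close>)
qed


lemma nn_sq: "0 \<le> real n * (real n - 1)"
  by (cases n) auto

lemma EE2:
  assumes t: "t \<in> {1..T}"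
  shows "integrable M (\<lambda>\<omega>. (Eproc U Yp m t \<omega>)\<^sup>2) \<and> expectation (\<lambda>\<omega>. (Eproc U Yp m t \<omega>)\<^sup>2)
    = s2 * (real m * (th1 * PP t)) + (u * u) * ((real m * (S2 * PP t) + real m * (real m - 1) * ((th1 * PP t) * (th1 * PP t))) - real m * (th1 * PP t))"
proof -
  let ?g = "\<lambda>n::nat. real n * s2 + real n * (real n - 1) * (u * u)"
  have s2: "0 \<le> s2" unfolding s2_def by simp
  have g0: "0 \<le> ?g n" for n
  proof -
    have "0 \<le> real n * s2" using s2 by simp
    moreover have "0 \<le> real n * (real n - 1) * (u * u)" using nn_sq[of n] by simp
    ultimately show ?thesis by linarith
  qed
  have "(\<integral>\<^sup>+\<omega>. ennreal ((Eproc U Yp m t \<omega>)\<^sup>2) \<partial>M)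
     = (\<Sum>n. emeasure M {\<omega>\<in>space M. Nt t \<omega> = n} * (\<integral>\<^sup>+\<omega>. ennreal ((Sn t n \<omega>)\<^sup>2) \<partial>M))"
    by (rule EE_gen[OF t]) auto
  also have "\<dots> = (\<Sum>n. emeasure M {\<omega>\<in>space M. Nt t \<omega> = n} * ennreal (?g n))"
    using ES2nn t by simp
  also have "\<dots> = (\<integral>\<^sup>+\<omega>. ennreal (?g (Nt t \<omega>)) \<partial>M)"
    by (rule nn_rv'[symmetric]) measurable
  also have "\<dots> = ennreal (expectation (\<lambda>\<omega>. ?g (Nt t \<omega>)))"
  proof (rule nn_integral_eq_integral)
    show "integrable M (\<lambda>\<omega>. ?g (Nt t \<omega>))"
      using EN1[OF t] EN2[OF t] by (simp add: algebra_simps power2_eq_square)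
  qed (use g0 in simp)
  also have "expectation (\<lambda>\<omega>. ?g (Nt t \<omega>)) = s2 * (real m * (th1 * PP t)) + (u * u) * ((real m * (S2 * PP t) + real m * (real m - 1) * ((th1 * PP t) * (th1 * PP t))) - real m * (th1 * PP t))"
  proof -
    have e: "(\<lambda>\<omega>. ?g (Nt t \<omega>)) = (\<lambda>\<omega>. s2 * real (Nt t \<omega>) + (u * u) * ((real (Nt t \<omega>))\<^sup>2 - real (Nt t \<omega>)))"
      by (auto simp: algebra_simps power2_eq_square)
    show ?thesis unfolding e using EN1[OF t] EN2[OF t] by simp
  qed
  finally have "(\<integral>\<^sup>+\<omega>. ennreal ((Eproc U Yp m t \<omega>)\<^sup>2) \<partial>M) = ennreal (s2 * (real m * (th1 * PP t)) + (u * u) * ((real m * (S2 * PP t) + real m * (real m - 1) * ((th1 * PP t) * (th1 * PP t))) - real m * (th1 * PP t)))" .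
  moreover have "0 \<le> s2 * (real m * (th1 * PP t)) + (u * u) * ((real m * (S2 * PP t) + real m * (real m - 1) * ((th1 * PP t) * (th1 * PP t))) - real m * (th1 * PP t))"
  proof -
    have "0 \<le> expectation (\<lambda>\<omega>. ?g (Nt t \<omega>))" using g0 by (intro Bochner_Integration.integral_nonneg) auto
    moreover have "expectation (\<lambda>\<omega>. ?g (Nt t \<omega>)) = s2 * (real m * (th1 * PP t)) + (u * u) * ((real m * (S2 * PP t) + real m * (real m - 1) * ((th1 * PP t) * (th1 * PP t))) - real m * (th1 * PP t))"
    proof -
      have e: "(\<lambda>\<omega>. ?g (Nt t \<omega>)) = (\<lambda>\<omega>. s2 * real (Nt t \<omega>) + (u * u) * ((real (Nt t \<omega>))\<^sup>2 - real (Nt t \<omega>)))"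
        by (auto simp: algebra_simps power2_eq_square)
      show ?thesis unfolding e using EN1[OF t] EN2[OF t] by simp
    qed
    ultimately show ?thesis by simp
  qed
  ultimately show ?thesis by (intro nn_to_int) auto
qed

lemma EEE:
  assumes t: "1 \<le> t'" "t' < t" "t \<le> T"
  shows "integrable M (\<lambda>\<omega>. Eproc U Yp m t \<omega> * Eproc U Yp m t' \<omega>) \<and> expectation (\<lambda>\<omega>. Eproc U Yp m t \<omega> * Eproc U Yp m t' \<omega>)
    = (u * u) * (real m * (th1 * CC t t') + real m * (real m - 1) * ((th1 * PP t) * (th1 * PP t')))"
proof -
  have tt: "t \<in> {1..T}" "t' \<in> {1..T}" "t \<noteq> t'" using t by auto
  define Ne where "Ne \<omega> = prod_encode (Nt t \<omega>, Nt t' \<omega>)" for \<omega>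
  let ?F1 = "\<lambda>k \<omega>. ennreal (Sn t (fst (prod_decode k)) \<omega>)"
  let ?F2 = "\<lambda>k \<omega>. ennreal (Sn t' (snd (prod_decode k)) \<omega>)"
  have "(\<integral>\<^sup>+\<omega>. ennreal (Eproc U Yp m t \<omega> * Eproc U Yp m t' \<omega>) \<partial>M) = (\<integral>\<^sup>+\<omega>. ?F1 (Ne \<omega>) \<omega> * ?F2 (Ne \<omega>) \<omega> \<partial>M)"
    by (intro nn_integral_cong) (use tt in \<open>simp add: Ne_def Eproc_Sn Sn_nonneg ennreal_mult\<close>)
  also have "\<dots> = (\<Sum>k. emeasure M {\<omega>\<in>space M. Ne \<omega> = k} * ((\<integral>\<^sup>+\<omega>. ?F1 k \<omega> \<partial>M) * (\<integral>\<^sup>+\<omega>. ?F2 k \<omega> \<partial>M)))"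
  proof (rule cond3[OF ind3[OF tt] BI3_sub BI3_sub BI3_sub])
    have [measurable]: "(\<lambda>\<omega>. Nt t \<omega>) \<in> measurable (sigma (space M) (\<Union>i\<in>BI3 t t' 0. SS i)) (count_space UNIV)"
      by (rule meas_N_block) (use tt in \<open>auto simp: BI3_def\<close>)
    have [measurable]: "(\<lambda>\<omega>. Nt t' \<omega>) \<in> measurable (sigma (space M) (\<Union>i\<in>BI3 t t' 0. SS i)) (count_space UNIV)"
      by (rule meas_N_block) (use tt in \<open>auto simp: BI3_def\<close>)
    show "Ne \<in> measurable (sigma (space M) (\<Union>i\<in>BI3 t t' 0. SS i)) (count_space UNIV)"
      unfolding Ne_def by measurable
    show "Ne \<in> measurable M (count_space UNIV)" unfolding Ne_def by measurable
    fix k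
    have "Sn t (fst (prod_decode k)) \<in> measurable (sigma (space M) (\<Union>i\<in>BI3 t t' 1. SS i)) borel"
      by (rule meas_S_block) (auto simp: BI3_def)
    then show "?F1 k \<in> measurable (sigma (space M) (\<Union>i\<in>BI3 t t' 1. SS i)) borel" by measurable
    have "Sn t' (snd (prod_decode k)) \<in> measurable (sigma (space M) (\<Union>i\<in>BI3 t t' 2. SS i)) borel"
      by (rule meas_S_block) (auto simp: BI3_def)
    then show "?F2 k \<in> measurable (sigma (space M) (\<Union>i\<in>BI3 t t' 2. SS i)) borel" by measurable
    show "?F1 k \<in> borel_measurable M" "?F2 k \<in> borel_measurable M" by measurable
  qed
  also have "\<dots> = (\<Sum>k. emeasure M {\<omega>\<in>space M. Ne \<omega> = k} * ennreal ((u * u) * (real (fst (prod_decode k)) * real (snd (prod_decode k)))))"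
    using ES1nn tt u_pos by (simp add: ennreal_mult[symmetric] mult_ac)
  also have "\<dots> = (\<integral>\<^sup>+\<omega>. ennreal ((u * u) * (real (fst (prod_decode (Ne \<omega>))) * real (snd (prod_decode (Ne \<omega>))))) \<partial>M)"
    by (rule nn_rv'[symmetric]) (unfold Ne_def, measurable)
  also have "\<dots> = (\<integral>\<^sup>+\<omega>. ennreal ((u * u) * (real (Nt t \<omega>) * real (Nt t' \<omega>))) \<partial>M)"
    by (simp add: Ne_def)
  also have "\<dots> = ennreal ((u * u) * (real m * (th1 * CC t t') + real m * (real m - 1) * ((th1 * PP t) * (th1 * PP t'))))"
  proof -
    have i: "integrable M (\<lambda>\<omega>. (u * u) * (real (Nt t \<omega>) * real (Nt t' \<omega>)))" using ENN[OF t] by simp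
    have "(\<integral>\<^sup>+\<omega>. ennreal ((u * u) * (real (Nt t \<omega>) * real (Nt t' \<omega>))) \<partial>M) = ennreal (expectation (\<lambda>\<omega>. (u * u) * (real (Nt t \<omega>) * real (Nt t' \<omega>))))"
      by (rule nn_integral_eq_integral[OF i]) simp
    then show ?thesis using ENN[OF t] by simp
  qed
  finally have nn: "(\<integral>\<^sup>+\<omega>. ennreal (Eproc U Yp m t \<omega> * Eproc U Yp m t' \<omega>) \<partial>M) = ennreal ((u * u) * (real m * (th1 * CC t t') + real m * (real m - 1) * ((th1 * PP t) * (th1 * PP t'))))" .
  have "0 \<le> (u * u) * (real m * (th1 * CC t t') + real m * (real m - 1) * ((th1 * PP t) * (th1 * PP t')))"
  proof -
    have "0 \<le> expectation (\<lambda>\<omega>. (u * u) * (real (Nt t \<omega>) * real (Nt t' \<omega>)))"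
      by (intro Bochner_Integration.integral_nonneg) simp
    then show ?thesis using ENN[OF t] by simp
  qed
  with nn show ?thesis
    by (intro nn_to_int) (use tt Eproc_Sn Sn_nonneg in auto)
qed
end


context full
begin

definition "BE t t' = (\<lambda>j::nat. if j = 0 then Fluo ` {1..m} \<union> {Unoise s i | s i. 1 \<le> s \<and> 1 \<le> i}
     else if j = 1 then {Enoise t} else {Enoise t'})"

lemma indE: "t \<in> {1..T} \<Longrightarrow> t' \<in> {1..T} \<Longrightarrow> t \<noteq> t' \<Longrightarrow> indep_sets (\<lambda>j. sigma_sets (space M) (\<Union>i\<in>BE t t' j. SS i)) {0, 1, 2}"
  by (rule blocks_indep) (auto simp: BE_def src_index_def disjoint_family_on_def)

lemma indE2: "t \<in> {1..T} \<Longrightarrow> indep_sets (\<lambda>j. sigma_sets (space M) (\<Union>i\<in>BE t t j. SS i)) {0, 1}"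
  by (rule blocks_indep) (auto simp: BE_def src_index_def disjoint_family_on_def)

lemma Eproc_block:
  assumes t: "t \<in> {1..T}"
  shows "Eproc U Yp m t \<in> measurable (sigma (space M) (\<Union>i\<in>BE t1 t2 0. SS i)) borel"
proof -
  have [measurable]: "(\<lambda>\<omega>. Nt t \<omega>) \<in> measurable (sigma (space M) (\<Union>i\<in>BE t1 t2 0. SS i)) (count_space UNIV)"
    by (rule meas_N_block) (use t in \<open>auto simp: BE_def\<close>)
  have S: "Sn t n \<in> measurable (sigma (space M) (\<Union>i\<in>BE t1 t2 0. SS i)) borel" for n
    by (rule meas_S_block) (use t in \<open>auto simp: BE_def\<close>)
  have "(\<lambda>\<omega>. Sn t (Nt t \<omega>) \<omega>) \<in> measurable (sigma (space M) (\<Union>i\<in>BE t1 t2 0. SS i)) borel"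
    by (rule measurable_compose_countable'[where I = UNIV]) (use S in auto)
  then show ?thesis by (simp add: Eproc_Sn[abs_def])
qed

lemma eps_block:
  assumes "Enoise s \<in> BE t1 t2 j"
  shows "eps s \<in> measurable (sigma (space M) (\<Union>i\<in>BE t1 t2 j. SS i)) borel"
  by (rule block_meas[OF assms]) (use pre_eps[of s] in auto)

lemma eps_integrable: "t \<in> {1..T} \<Longrightarrow> integrable M (eps t)"
  by (rule square_integrable_imp_integrable) (use eps_meas eps_int in auto)

lemma E_eps:
  assumes t: "t \<in> {1..T}" "s \<in> {1..T}"
  shows "integrable M (\<lambda>\<omega>. Eproc U Yp m t \<omega> * eps s \<omega>) \<and> expectation (\<lambda>\<omega>. Eproc U Yp m t \<omega> * eps s \<omega>) = 0"
proof -
  have "integrable M (\<lambda>\<omega>. Eproc U Yp m t \<omega> * eps s \<omega>) \<and> expectation (\<lambda>\<omega>. Eproc U Yp m t \<omega> * eps s \<omega>)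
      = expectation (Eproc U Yp m t) * expectation (eps s)"
  proof (rule indep_pair[OF indE2[OF t(2)], of 0 1])
    show "{Eproc U Yp m t -` A \<inter> space M |A. A \<in> sets borel} \<subseteq> sigma_sets (space M) (\<Union>i\<in>BE s s 0. SS i)"
      by (rule preimage_sigma[OF Eproc_block[OF t(1)] blocks_sub])
    show "{eps s -` A \<inter> space M |A. A \<in> sets borel} \<subseteq> sigma_sets (space M) (\<Union>i\<in>BE s s 1. SS i)"
      by (rule preimage_sigma[OF eps_block blocks_sub]) (simp add: BE_def)
  qed (use EE1[OF t(1)] eps_integrable[OF t(2)] eps_meas in auto)
  then show ?thesis using eps_mean t by simp
qed

lemma eps_eps:
  assumes t: "t \<in> {1..T}" "t' \<in> {1..T}" "t \<noteq> t'"
  shows "integrable M (\<lambda>\<omega>. eps t \<omega> * eps t' \<omega>) \<and> expectation (\<lambda>\<omega>. eps t \<omega> * eps t' \<omega>) = 0"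
proof -
  have "integrable M (\<lambda>\<omega>. eps t \<omega> * eps t' \<omega>) \<and> expectation (\<lambda>\<omega>. eps t \<omega> * eps t' \<omega>)
      = expectation (eps t) * expectation (eps t')"
    by (rule indep_pair[OF indep_src, of "Enoise t" "Enoise t'"])
       (use t eps_meas pre_eps eps_integrable in \<open>auto simp: src_index_def\<close>)
  then show ?thesis using eps_mean t by simp
qed

end


context full
begin

lemma Z_eq: "Zproc c u ofs U eps Yp m t = (\<lambda>\<omega>. Eproc U Yp m t \<omega> / u + eps t \<omega> / (c * u))"
  using c_pos u_pos by (auto simp: Zproc_def Ytilde_def field_simps intro!: ext)

lemma eps2: "t \<in> {1..T} \<Longrightarrow> expectation (\<lambda>\<omega>. (eps t \<omega>)\<^sup>2) = (\<sigma> t)\<^sup>2"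
  using eps_var[of t] eps_mean[of t] by simp

definition "mu t = real m * (th1 * PP t)"

lemma Zmean:
  assumes t: "t \<in> {1..T}"
  shows "integrable M (Zproc c u ofs U eps Yp m t) \<and> expectation (Zproc c u ofs U eps Yp m t) = mu t"
proof -
  have i1: "integrable M (Eproc U Yp m t)" using EE1[OF t] by simp
  have i2: "integrable M (eps t)" using eps_integrable[OF t] .
  show ?thesis unfolding Z_eq using i1 i2 EE1[OF t] eps_mean[OF t] u_pos
    by (simp add: mu_def)
qed

lemma Zsq:
  assumes t: "t \<in> {1..T}"
  shows "integrable M (\<lambda>\<omega>. (Zproc c u ofs U eps Yp m t \<omega>)\<^sup>2) \<and>
    expectation (\<lambda>\<omega>. (Zproc c u ofs U eps Yp m t \<omega>)\<^sup>2)
     = (s2 * mu t + (u * u) * ((real m * (S2 * PP t) + real m * (real m - 1) * ((th1 * PP t) * (th1 * PP t))) - mu t)) / (u * u)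
       + (\<sigma> t)\<^sup>2 / ((c * u) * (c * u))"
proof -
  have e: "(\<lambda>\<omega>. (Zproc c u ofs U eps Yp m t \<omega>)\<^sup>2) = (\<lambda>\<omega>. (Eproc U Yp m t \<omega>)\<^sup>2 / (u * u)
     + (2 / (u * (c * u))) * (Eproc U Yp m t \<omega> * eps t \<omega>) + (eps t \<omega>)\<^sup>2 / ((c * u) * (c * u)))"
    unfolding Z_eq using c_pos u_pos by (auto simp: power2_eq_square field_simps intro!: ext)
  have i1: "integrable M (\<lambda>\<omega>. (Eproc U Yp m t \<omega>)\<^sup>2)" using EE2[OF t] by simp
  have i2: "integrable M (\<lambda>\<omega>. Eproc U Yp m t \<omega> * eps t \<omega>)" using E_eps[OF t t] by simp
  have i3: "integrable M (\<lambda>\<omega>. (eps t \<omega>)\<^sup>2)" using eps_int[OF t] .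
  show ?thesis unfolding e using i1 i2 i3 EE2[OF t] E_eps[OF t t] eps2[OF t]
    by (simp add: mu_def)
qed

lemma covar_eq:
  fixes Xa Ya :: "'a \<Rightarrow> real"
  assumes "integrable M Xa" "integrable M Ya" "integrable M (\<lambda>\<omega>. Xa \<omega> * Ya \<omega>)"
  shows "covar M Xa Ya = expectation (\<lambda>\<omega>. Xa \<omega> * Ya \<omega>) - expectation Xa * expectation Ya"
proof -
  have e: "(\<lambda>\<omega>. (Xa \<omega> - expectation Xa) * (Ya \<omega> - expectation Ya))
     = (\<lambda>\<omega>. Xa \<omega> * Ya \<omega> - expectation Ya * Xa \<omega> - expectation Xa * Ya \<omega> + expectation Xa * expectation Ya)"
    by (auto simp: algebra_simps intro!: ext)
  show ?thesis unfolding covar_def e using assms by (simp add: prob_space)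
qed

lemma Zcov:
  assumes t: "1 \<le> t'" "t' < t" "t \<le> T"
  shows "covar M (Zproc c u ofs U eps Yp m t) (Zproc c u ofs U eps Yp m t')
     = (real m * (th1 * CC t t') + real m * (real m - 1) * ((th1 * PP t) * (th1 * PP t'))) - mu t * mu t'"
proof -
  have tt: "t \<in> {1..T}" "t' \<in> {1..T}" "t \<noteq> t'" using t by auto
  have e: "(\<lambda>\<omega>. Zproc c u ofs U eps Yp m t \<omega> * Zproc c u ofs U eps Yp m t' \<omega>)
     = (\<lambda>\<omega>. (Eproc U Yp m t \<omega> * Eproc U Yp m t' \<omega>) / (u * u) + (Eproc U Yp m t \<omega> * eps t' \<omega>) / (u * (c * u))
        + (Eproc U Yp m t' \<omega> * eps t \<omega>) / (u * (c * u)) + (eps t \<omega> * eps t' \<omega>) / ((c * u) * (c * u)))"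
    unfolding Z_eq using c_pos u_pos by (auto simp: field_simps intro!: ext)
  have i: "integrable M (\<lambda>\<omega>. Eproc U Yp m t \<omega> * Eproc U Yp m t' \<omega>)" "integrable M (\<lambda>\<omega>. Eproc U Yp m t \<omega> * eps t' \<omega>)"
     "integrable M (\<lambda>\<omega>. Eproc U Yp m t' \<omega> * eps t \<omega>)" "integrable M (\<lambda>\<omega>. eps t \<omega> * eps t' \<omega>)"
    using EEE[OF t] E_eps[OF tt(1,2)] E_eps[OF tt(2,1)] eps_eps[OF tt] by auto
  have iZZ: "integrable M (\<lambda>\<omega>. Zproc c u ofs U eps Yp m t \<omega> * Zproc c u ofs U eps Yp m t' \<omega>)"
    unfolding e using i by simp
  have EZZ: "expectation (\<lambda>\<omega>. Zproc c u ofs U eps Yp m t \<omega> * Zproc c u ofs U eps Yp m t' \<omega>)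
      = real m * (th1 * CC t t') + real m * (real m - 1) * ((th1 * PP t) * (th1 * PP t'))"
    unfolding e using i EEE[OF t] E_eps[OF tt(1,2)] E_eps[OF tt(2,1)] eps_eps[OF tt] u_pos by simp
  show ?thesis using covar_eq[OF _ _ iZZ] Zmean[OF tt(1)] Zmean[OF tt(2)] EZZ by simp
qed


lemma th1_ne: "th1 \<noteq> 0" using th1_pos by (simp add: th1_def)

lemma th3_eq: "th1 * (theta3 r q p00 p10 + 1) = S2 / th1 - 1"
  using th1_ne unfolding theta3_def th1_def[symmetric] S2_def[symmetric]
  by (simp add: field_simps power2_eq_square)

lemma f2_eq: "variance (U 1 1) / u\<^sup>2 + 1 = s2 / (u * u)"
proof -
  have "variance (U 1 1) = s2 - u * u"
    using variance_eq[OF U_int] U_mean by (simp add: s2_def power2_eq_square)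
  then show ?thesis using u_pos by (simp add: field_simps power2_eq_square)
qed

lemma Zvar_real:
  assumes t: "t \<in> {1..T}"
  shows "variance (Zproc c u ofs U eps Yp m t)
     = (1 / real m) * (real m * th1 * (theta3 r q p00 p10 + 1) + real m * (variance (U 1 1) / u\<^sup>2 + 1) - mu t) * mu t
       + (\<sigma> t)\<^sup>2 / (c * u)\<^sup>2"
proof -
  have "variance (Zproc c u ofs U eps Yp m t) = expectation (\<lambda>\<omega>. (Zproc c u ofs U eps Yp m t \<omega>)\<^sup>2) - (expectation (Zproc c u ofs U eps Yp m t))\<^sup>2"
    using Zmean[OF t] Zsq[OF t] by (intro variance_eq) auto
  also have "\<dots> = (s2 * mu t + (u * u) * ((real m * (S2 * PP t) + real m * (real m - 1) * ((th1 * PP t) * (th1 * PP t))) - mu t)) / (u * u)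
       + (\<sigma> t)\<^sup>2 / ((c * u) * (c * u)) - (mu t)\<^sup>2"
    using Zmean[OF t] Zsq[OF t] by simp
  also have "\<dots> = (1 / real m) * (real m * th1 * (theta3 r q p00 p10 + 1) + real m * (variance (U 1 1) / u\<^sup>2 + 1) - mu t) * mu t
       + (\<sigma> t)\<^sup>2 / (c * u)\<^sup>2"
  proof -
    have m0: "real m \<noteq> 0" using m1 by simp
    have h1: "real m * th1 * (theta3 r q p00 p10 + 1) = real m * (S2 / th1 - 1)" using th3_eq by simp
    have h2: "variance (U 1 1) / u\<^sup>2 + 1 = s2 / (u * u)" by (rule f2_eq)
    show ?thesis unfolding h1 h2 using m0 th1_ne u_pos c_pos
      by (simp add: mu_def field_simps power2_eq_square)
  qed
  finally show ?thesis .
qed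

end


lemma cov_alg:
  fixes m th1 A B a0 b0 q0 C P P' :: real and gd g1 :: complex
  assumes m0: "m \<noteq> 0" and t0: "th1 \<noteq> 0" and hB: "th1 * B = b0" and hA: "th1 * A = (a0 - b0) * q0"
    and hC: "complex_of_real C = of_real P' * (of_real b0 * g1 + of_real (a0 - b0) * of_real q0 * gd)"
  shows "complex_of_real (m * (th1 * C) + m * (m - 1) * ((th1 * P) * (th1 * P')) - (m * (th1 * P)) * (m * (th1 * P')))
    = 1 / of_real m * (of_real A * (of_real m * of_real th1 * gd) + of_real B * (of_real m * of_real th1 * g1)
        - of_real (m * (th1 * P))) * of_real (m * (th1 * P'))"
proof -
  have A: "A = (a0 - b0) * q0 / th1" using hA t0 by (simp add: field_simps)
  have B: "B = b0 / th1" using hB t0 by (simp add: field_simps)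
  have "complex_of_real (m * (th1 * C) + m * (m - 1) * ((th1 * P) * (th1 * P')) - (m * (th1 * P)) * (m * (th1 * P')))
     = of_real m * of_real th1 * of_real C + of_real m * (of_real m - 1) * ((of_real th1 * of_real P) * (of_real th1 * of_real P')) - (of_real m * (of_real th1 * of_real P)) * (of_real m * (of_real th1 * of_real P'))"
    by simp
  also have "\<dots> = 1 / of_real m * (of_real A * (of_real m * of_real th1 * gd) + of_real B * (of_real m * of_real th1 * g1)
        - of_real (m * (th1 * P))) * of_real (m * (th1 * P'))"
    unfolding hC A B using m0 t0 by (simp add: field_simps)
  finally show ?thesis .
qed

context full
begin

lemma diagL: "diagL r q V Vinv lam"
  by unfold_locales (use r1 q0ne V_inv1 V_inv2 diag V_col_r in auto)

lemma cmu: "1 \<le> t \<Longrightarrow> complex_of_real (mu t) = mu_of r m (theta1 r q p00 p10) (alpha r V Vinv lam q \<nu>) lam t"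
proof -
  assume t: "1 \<le> t"
  interpret D: diagL r q V Vinv lam by (rule diagL)
  have "complex_of_real (PP t) = (\<Sum>x<r. alpha r V Vinv lam q \<nu> x * lam x ^ (t - 1))"
    unfolding PP_def by (rule D.D1[OF t])
  then show ?thesis by (simp add: mu_def mu_of_def th1_def)
qed

definition "a0 = pmf_mean p00"
definition "b0 = pmf_mean p10"

lemma cCC:
  assumes t: "1 \<le> t'" "t' < t"
  shows "complex_of_real (CC t t') = of_real (PP t') * (of_real b0 * diagL.G r q V Vinv lam (t - t' + 1)
     + of_real (a0 - b0) * of_real (q 0 0) * diagL.G r q V Vinv lam (t - t'))"
proof -
  interpret D: diagL r q V Vinv lam by (rule diagL)
  have w: "(\<lambda>z. PP t' * (Ms q z 0 * pmf_mean (emis p00 p10 z 0))) = (\<lambda>z. PP t' * (Ms q z 0 * (if z = 0 then a0 else b0)))"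
    by (auto simp: emis_def a0_def b0_def intro!: ext)
  have d: "1 \<le> t - t'" using t by auto
  have "complex_of_real (chainf r q (\<lambda>_ _ _. 1) (\<lambda>z. PP t' * (Ms q z 0 * (if z = 0 then a0 else b0))) (t - t') 0)
     = of_real (PP t') * of_real (q 0 0) * (of_real b0 * D.G (t - t' + 1) + of_real (a0 - b0) * of_real (q 0 0) * D.G (t - t'))"
    by (rule D.D2[OF d])
  then show ?thesis unfolding CC_def w using q0ne by (simp add: field_simps)
qed

lemma th1_exp: "th1 = q 0 0 * a0 + (1 - q 0 0) * b0"
proof -
  have s: "(\<Sum>i<r. q (Suc i) 0) = 1 - q 0 0"
    using q_sum[of 0] by (simp add: sum.atMost_shift)
  have "th1 = (\<Sum>x\<le>r. q x 0 * (if x = 0 then a0 else b0))"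
    unfolding th1_def theta1_def by (intro sum.cong refl) (auto simp: Ms_def emis_def a0_def b0_def)
  also have "\<dots> = q 0 0 * a0 + (\<Sum>i<r. q (Suc i) 0) * b0"
    by (simp add: sum.atMost_shift sum_distrib_right)
  finally show ?thesis using s by simp
qed

lemma th2_eq: "th1 * theta2 r q p00 p10 = q 0 0 * a0"
  using th1_ne by (simp add: theta2_def th1_def[symmetric] emis_def a0_def)

lemma hB: "th1 * ((1 - theta2 r q p00 p10) / (1 - q 0 0)) = b0"
proof -
  have "th1 * (1 - theta2 r q p00 p10) = th1 - th1 * theta2 r q p00 p10" by (simp add: right_diff_distrib)
  also have "\<dots> = (1 - q 0 0) * b0" using th2_eq th1_exp by linarith
  finally have "th1 * (1 - theta2 r q p00 p10) = (1 - q 0 0) * b0" .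
  then show ?thesis using q00 by (simp add: field_simps)
qed

lemma hA: "th1 * (theta2 r q p00 p10 - q 0 0 * (1 - theta2 r q p00 p10) / (1 - q 0 0)) = (a0 - b0) * q 0 0"
proof -
  have "th1 * (theta2 r q p00 p10 - q 0 0 * (1 - theta2 r q p00 p10) / (1 - q 0 0))
      = th1 * theta2 r q p00 p10 - q 0 0 * (th1 * ((1 - theta2 r q p00 p10) / (1 - q 0 0)))"
    by (simp add: algebra_simps)
  also have "\<dots> = (a0 - b0) * q 0 0" using th2_eq hB by (simp add: algebra_simps)
  finally show ?thesis .
qed

lemma G_mu0: "mu_of r m th1 (alpha0 V Vinv lam q) lam k = of_nat m * of_real th1 * diagL.G r q V Vinv lam k"
  by (simp add: mu_of_def diagL.G_def[OF diagL])

lemma final: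
  shows
    "let a = c * u;
         f2 = prob_space.variance M (U 1 1) / u\<^sup>2 + 1;
         th1 = theta1 r q p00 p10; th2 = theta2 r q p00 p10; th3 = theta3 r q p00 p10;
         \<mu> = mu_of r m th1 (alpha r V Vinv lam q \<nu>) lam;
         \<mu>0 = mu_of r m th1 (alpha0 V Vinv lam q) lam;
         Z = Zproc c u ofs U eps Yp m
     in (\<forall>t\<in>{1..T}.
            integrable M (\<lambda>\<omega>. (Z t \<omega>)\<^sup>2)
          \<and> complex_of_real (integral\<^sup>L M (Z t)) = \<mu> t
          \<and> complex_of_real (prob_space.variance M (Z t))
              = (1 / of_nat m) * (of_nat m * th1 * (th3 + 1) + of_nat m * f2 - \<mu> t) * \<mu> t
                + complex_of_real ((\<sigma> t)\<^sup>2 / a\<^sup>2))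
      \<and> (\<forall>t t'. 1 \<le> t' \<and> t' < t \<and> t \<le> T \<longrightarrow>
            complex_of_real (covar M (Z t) (Z t'))
              = (1 / of_nat m) *
                 ((complex_of_real (th2 - q 0 0 * (1 - th2) / (1 - q 0 0))) * \<mu>0 (t - t')
                  + complex_of_real ((1 - th2) / (1 - q 0 0)) * \<mu>0 (t - t' + 1)
                  - \<mu> t) * \<mu> t')"
  unfolding Let_def th1_def[symmetric]
proof (intro conjI ballI allI impI)
  fix t assume t: "t \<in> {1..T}"
  show "integrable M (\<lambda>\<omega>. (Zproc c u ofs U eps Yp m t \<omega>)\<^sup>2)" using Zsq[OF t] by simp
  show "complex_of_real (expectation (Zproc c u ofs U eps Yp m t)) = mu_of r m th1 (alpha r V Vinv lam q \<nu>) lam t"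
    using Zmean[OF t] cmu[of t] t by (simp add: th1_def)
  have cm: "complex_of_real (mu t) = mu_of r m th1 (alpha r V Vinv lam q \<nu>) lam t"
    using cmu[of t] t by (simp add: th1_def)
  show "complex_of_real (variance (Zproc c u ofs U eps Yp m t)) =
        1 / complex_of_nat m * (complex_of_real (real m * th1 * (theta3 r q p00 p10 + 1) + real m * (variance (U 1 1) / u\<^sup>2 + 1)) -
         mu_of r m th1 (alpha r V Vinv lam q \<nu>) lam t) * mu_of r m th1 (alpha r V Vinv lam q \<nu>) lam t +
        complex_of_real ((\<sigma> t)\<^sup>2 / (c * u)\<^sup>2)"
    unfolding Zvar_real[OF t] cm[symmetric] by simp
next
  fix t t' assume tt: "1 \<le> t' \<and> t' < t \<and> t \<le> T"
  then have t: "1 \<le> t'" "t' < t" "t \<le> T" by auto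
  have cm: "complex_of_real (mu s) = mu_of r m th1 (alpha r V Vinv lam q \<nu>) lam s" if "1 \<le> s" for s
    using cmu[OF that] by (simp add: th1_def)
  have m0: "real m \<noteq> 0" using m1 by simp
  have "complex_of_real (covar M (Zproc c u ofs U eps Yp m t) (Zproc c u ofs U eps Yp m t'))
     = complex_of_real (real m * (th1 * CC t t') + real m * (real m - 1) * ((th1 * PP t) * (th1 * PP t')) - (real m * (th1 * PP t)) * (real m * (th1 * PP t')))"
    using Zcov[OF t] by (simp add: mu_def)
  also have "\<dots> = 1 / of_real (real m) * (of_real (theta2 r q p00 p10 - q 0 0 * (1 - theta2 r q p00 p10) / (1 - q 0 0)) * (of_real (real m) * of_real th1 * diagL.G r q V Vinv lam (t - t'))
        + of_real ((1 - theta2 r q p00 p10) / (1 - q 0 0)) * (of_real (real m) * of_real th1 * diagL.G r q V Vinv lam (t - t' + 1))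
        - of_real (real m * (th1 * PP t))) * of_real (real m * (th1 * PP t'))"
    by (rule cov_alg[OF m0 th1_ne hB hA cCC[OF t(1,2)]])
  also have "\<dots> = 1 / complex_of_nat m *
       (complex_of_real (theta2 r q p00 p10 - q 0 0 * (1 - theta2 r q p00 p10) / (1 - q 0 0)) * mu_of r m th1 (alpha0 V Vinv lam q) lam (t - t') +
        complex_of_real ((1 - theta2 r q p00 p10) / (1 - q 0 0)) * mu_of r m th1 (alpha0 V Vinv lam q) lam (t - t' + 1) -
        mu_of r m th1 (alpha r V Vinv lam q \<nu>) lam t) * mu_of r m th1 (alpha r V Vinv lam q \<nu>) lam t'"
  proof -
    have c1: "complex_of_real (mu t) = mu_of r m th1 (alpha r V Vinv lam q \<nu>) lam t" using t by (intro cm) simp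
    have c2: "complex_of_real (mu t') = mu_of r m th1 (alpha r V Vinv lam q \<nu>) lam t'" using t by (intro cm) simp
    show ?thesis unfolding G_mu0 c1[symmetric] c2[symmetric] by (simp add: mu_def)
  qed
  finally show "complex_of_real (covar M (Zproc c u ofs U eps Yp m t) (Zproc c u ofs U eps Yp m t')) =
       1 / complex_of_nat m *
       (complex_of_real (theta2 r q p00 p10 - q 0 0 * (1 - theta2 r q p00 p10) / (1 - q 0 0)) * mu_of r m th1 (alpha0 V Vinv lam q) lam (t - t') +
        complex_of_real ((1 - theta2 r q p00 p10) / (1 - q 0 0)) * mu_of r m th1 (alpha0 V Vinv lam q) lam (t - t' + 1) -
        mu_of r m th1 (alpha r V Vinv lam q \<nu>) lam t) * mu_of r m th1 (alpha r V Vinv lam q \<nu>) lam t'" .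
qed

end


theorem mainTheorem8:
  fixes M :: "'a measure"
    and r T m :: nat
    and q :: "nat \<Rightarrow> nat \<Rightarrow> real"
    and \<nu> :: "nat \<Rightarrow> real"
    and p00 p10 :: "nat pmf"
    and V Vinv :: "nat \<Rightarrow> nat \<Rightarrow> complex"
    and lam :: "nat \<Rightarrow> complex"
    and X Xp Yp :: "nat \<Rightarrow> nat \<Rightarrow> 'a \<Rightarrow> nat"
    and U :: "nat \<Rightarrow> nat \<Rightarrow> 'a \<Rightarrow> real"
    and eps :: "nat \<Rightarrow> 'a \<Rightarrow> real"
    and \<sigma> :: "nat \<Rightarrow> real"
    and u c ofs :: real
  assumes "prob_space M"
    and "1 \<le> r" and "1 \<le> T" and "1 \<le> m"
    \<comment> \<open>HTMM parameters\<close>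
    and q_range: "\<And>x z. x \<le> r \<Longrightarrow> z \<le> r - 1 \<Longrightarrow> 0 \<le> q x z \<and> q x z \<le> 1"
    and q_sum: "\<And>z. z \<le> r - 1 \<Longrightarrow> (\<Sum>x\<le>r. q x z) = 1"
    and nu_nonneg: "\<And>z. z \<le> r \<Longrightarrow> 0 \<le> \<nu> z"
    and nu_sum: "(\<Sum>z\<le>r. \<nu> z) = 1"
    and q00: "0 < q 0 0" "q 0 0 < 1"
    and th1_pos: "0 < theta1 r q p00 p10"
    and mgf: "mgf_finite_near0 p00" "mgf_finite_near0 p10"
    \<comment> \<open>diagonalization M = V Lambda V^{-1}, lambda_r = 1, column r of V equal to e_r\<close>
    and V_inv1: "\<And>i j. i \<le> r \<Longrightarrow> j \<le> r \<Longrightarrow> (\<Sum>k\<le>r. V i k * Vinv k j) = (if i = j then 1 else 0)"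
    and V_inv2: "\<And>i j. i \<le> r \<Longrightarrow> j \<le> r \<Longrightarrow> (\<Sum>k\<le>r. Vinv i k * V k j) = (if i = j then 1 else 0)"
    and diag: "\<And>x z. x \<le> r \<Longrightarrow> z \<le> r \<Longrightarrow>
                 complex_of_real (Mmat r q x z) = (\<Sum>y\<le>r. V x y * lam y * Vinv y z)"
    and lam_r: "lam r = 1"
    and V_col_r: "\<And>x. x \<le> r \<Longrightarrow> V x r = (if x = r then 1 else 0)"
    \<comment> \<open>m copies of the single-fluorophore process (X_t, X'_t, Y'_t) with the HTMM law\<close>
    and X_meas: "\<And>k t. X k t \<in> measurable M (count_space UNIV)"
    and Xp_meas: "\<And>k t. Xp k t \<in> measurable M (count_space UNIV)"
    and Yp_meas: "\<And>k t. Yp k t \<in> measurable M (count_space UNIV)"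
    and law: "\<And>k xs xps ys. k \<in> {1..m} \<Longrightarrow> (\<forall>t\<le>T. xs t \<le> r) \<Longrightarrow> (\<forall>t\<in>{1..T}. xps t \<le> r) \<Longrightarrow>
       measure M {\<omega> \<in> space M. \<forall>t\<le>T. X k t \<omega> = xs t \<and>
                      (1 \<le> t \<longrightarrow> Xp k t \<omega> = xps t \<and> Yp k t \<omega> = ys t)}
       = \<nu> (xs 0) * (\<Prod>t\<in>{1..T}. Ml r q (xps t) (xs (t - 1)) * Ms q (xs t) (xps t)
                                 * pmf (emis p00 p10 (xs t) (xps t)) (ys t))"
    \<comment> \<open>the U_{t,k}: i.i.d., nonnegative, mean u > 0, finite variance\<close>
    and U_meas: "\<And>t k. U t k \<in> borel_measurable M"
    and U_nonneg: "\<And>t k \<omega>. 1 \<le> t \<Longrightarrow> 1 \<le> k \<Longrightarrow> \<omega> \<in> space M \<Longrightarrow> 0 \<le> U t k \<omega>"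
    and U_ident: "\<And>t k. 1 \<le> t \<Longrightarrow> 1 \<le> k \<Longrightarrow> distr M borel (U t k) = distr M borel (U 1 1)"
    and U_int: "integrable M (U 1 1)" "integrable M (\<lambda>\<omega>. (U 1 1 \<omega>)\<^sup>2)"
    and U_mean: "integral\<^sup>L M (U 1 1) = u" and u_pos: "0 < u"
    \<comment> \<open>noise eps_t: centered with variance sigma_t^2\<close>
    and eps_meas: "\<And>t. eps t \<in> borel_measurable M"
    and eps_int: "\<And>t. t \<in> {1..T} \<Longrightarrow> integrable M (\<lambda>\<omega>. (eps t \<omega>)\<^sup>2)"
    and eps_mean: "\<And>t. t \<in> {1..T} \<Longrightarrow> integral\<^sup>L M (eps t) = 0"
    and eps_var: "\<And>t. t \<in> {1..T} \<Longrightarrow> prob_space.variance M (eps t) = (\<sigma> t)\<^sup>2"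
    \<comment> \<open>mutual independence of the fluorophores, the U_{t,k} and the eps_t\<close>
    and indep: "prob_space.indep_sets M (src_sigma M T X Xp Yp U eps) (src_index m T)"
    and c_pos: "0 < c"
  shows
    "let a = c * u;
         f2 = prob_space.variance M (U 1 1) / u\<^sup>2 + 1;
         th1 = theta1 r q p00 p10; th2 = theta2 r q p00 p10; th3 = theta3 r q p00 p10;
         \<mu> = mu_of r m th1 (alpha r V Vinv lam q \<nu>) lam;
         \<mu>0 = mu_of r m th1 (alpha0 V Vinv lam q) lam;
         Z = Zproc c u ofs U eps Yp m
     in (\<forall>t\<in>{1..T}.
            integrable M (\<lambda>\<omega>. (Z t \<omega>)\<^sup>2)
          \<and> complex_of_real (integral\<^sup>L M (Z t)) = \<mu> t
          \<and> complex_of_real (prob_space.variance M (Z t))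
              = (1 / of_nat m) * (of_nat m * th1 * (th3 + 1) + of_nat m * f2 - \<mu> t) * \<mu> t
                + complex_of_real ((\<sigma> t)\<^sup>2 / a\<^sup>2))
      \<and> (\<forall>t t'. 1 \<le> t' \<and> t' < t \<and> t \<le> T \<longrightarrow>
            complex_of_real (covar M (Z t) (Z t'))
              = (1 / of_nat m) *
                 ((complex_of_real (th2 - q 0 0 * (1 - th2) / (1 - q 0 0))) * \<mu>0 (t - t')
                  + complex_of_real ((1 - th2) / (1 - q 0 0)) * \<mu>0 (t - t' + 1)
                  - \<mu> t) * \<mu> t')"
proof -
  interpret F: full M r T m q \<nu> p00 p10 V Vinv lam X Xp Yp U eps \<sigma> u c ofs
    using assms by (intro full.intro full_axioms.intro) assumption+
  show ?thesis by (rule F.final)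
qed


end
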